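(* Fix a round $t$ and a common starting point $\bm{\theta}^t\in\mathbb{R}^d$. For every device $i\in[n]$ define the local noisy SGD trajectory $\bm{\theta}_i^{t\tau}=\bm{\theta}^t$, $\bm{\theta}_i^{t\tau+h+1}=\bm{\theta}_i^{t\tau+h}-\eta(g(\bm{\theta}_i^{t\tau+h})+\mathbf{b}_i^{t\tau+h})$ for $h=0,\dots,\tau-1$, where $g(\bm{\theta})=\frac1\gamma\sum_{\xi\in X}\nabla l(\bm{\theta},\xi)$ over a fresh mini-batch of $\gamma$ independent samples from $D_i$, and $\mathbf{b}_i^{t\tau+h}\sim\mathcal{N}(0,\sigma^2\mathbf{I}_d)$ are independent. Let $\Omega_t$ be a uniformly random $r$-subset of $[n]$ independent of these trajectories, and for $k=t\tau+s$ ($0\le s\le\tau-1$) let $\hat{\bm{\theta}}^k=\frac1r\sum_{i\in\Omega_t}\bm{\theta}_i^k$. Assume $\mathbb{E}[\nabla l(\mathbf{x},\xi_i)]=\nabla f_i(\mathbf{x})$ and $\mathbb{E}\|\nabla l(\mathbf{x},\xi_i)-\nabla f_i(\mathbf{x})\|^2\le\beta^2$ for $\xi_i$ sampled from $D_i$. Then $$\mathbb{E}\Big[\frac1r\sum_{i\in\Omega_t}\|\hat{\bm{\theta}}^k-\bm{\theta}_i^k\|^2\Big]\le2s^2\eta^2\Big(\frac{d\sigma^2(r+1)}{r}+\frac{2\beta^2}{\gamma}\Big)+4s\eta^2\frac{2(n-r)^2+n^2}{n^3}\sum_{h=0}^{s-1}\sum_{i=1}^n\mathbb{E}\|\nabla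 f_i(\bm{\theta}_i^{t\tau+h})\|^2.$$
   Context: $f_i(\bm{\theta})=\frac1{|D_i|}\sum_{\xi\in D_i}l(\bm{\theta},\xi)$ is the local objective of device $i$; $\eta$ step size, $\tau$ local period, $\gamma$ mini-batch size, $d$ model dimension, $r$ number of selected devices. The quantity on the left is the (network) divergence between the selected devices' local models and their average at local step $s$ of round $t$. *)

theory Defs
  imports "HOL-Probability.Probability"
begin

definition local_obj :: "(nat \<Rightarrow> 'x set) \<Rightarrow> ('v \<Rightarrow> 'x \<Rightarrow> real) \<Rightarrow> nat \<Rightarrow> 'v \<Rightarrow> real" where
  "local_obj D l i \<theta> = (1 / real (card (D i))) * (\<Sum>\<xi>\<in>D i. l \<theta> \<xi>)"

text \<open>Local noisy mini-batch SGD trajectory of device i within the round, started at theta0.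
  traj ... i h \<omega> is the local model at global step t*tau + h.
  xi i h j \<omega> is the j-th mini-batch sample (j < gamma) at local step h, b i h \<omega> the Gaussian noise.\<close>
fun traj :: "real \<Rightarrow> nat \<Rightarrow> ('v::real_vector \<Rightarrow> 'x \<Rightarrow> 'v) \<Rightarrow> 'v
             \<Rightarrow> (nat \<Rightarrow> nat \<Rightarrow> nat \<Rightarrow> 'a \<Rightarrow> 'x) \<Rightarrow> (nat \<Rightarrow> nat \<Rightarrow> 'a \<Rightarrow> 'v)
             \<Rightarrow> nat \<Rightarrow> nat \<Rightarrow> 'a \<Rightarrow> 'v" where
  "traj \<eta> \<gamma> gl \<theta>0 \<xi> b i 0 \<omega> = \<theta>0"
| "traj \<eta> \<gamma> gl \<theta>0 \<xi> b i (Suc h) \<omega> =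
     traj \<eta> \<gamma> gl \<theta>0 \<xi> b i h \<omega>
     - \<eta> *\<^sub>R ((1 / real \<gamma>) *\<^sub>R (\<Sum>j<\<gamma>. gl (traj \<eta> \<gamma> gl \<theta>0 \<xi> b i h \<omega>) (\<xi> i h j \<omega>))
                + b i h \<omega>)"

definition gauss_density :: "real \<Rightarrow> real^'d \<Rightarrow> ennreal" where
  "gauss_density \<sigma> x = ennreal (\<Prod>j\<in>UNIV. normal_density 0 \<sigma> (x $ j))"

end

theory Submission
  imports Defs
begin

lemma norm3_bound:
  fixes p q w :: "'v::real_inner"
  shows "(norm (p + q + w))\<^sup>2 \<le> 4 * (norm p)\<^sup>2 + 4 * (norm q)\<^sup>2 + 2 * (norm w)\<^sup>2"
proof -
  have "(norm (p + q + w))\<^sup>2 + (norm (w - p - q))\<^sup>2 + 2 * (norm (p - q))\<^sup>2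
        = 4 * (norm p)\<^sup>2 + 4 * (norm q)\<^sup>2 + 2 * (norm w)\<^sup>2"
    by (simp add: power2_norm_eq_inner inner_add_left inner_add_right inner_diff_left
        inner_diff_right inner_commute algebra_simps)
  moreover have "0 \<le> (norm (w - p - q))\<^sup>2 + 2 * (norm (p - q))\<^sup>2" by simp
  ultimately show ?thesis by linarith
qed

lemma norm_sum_sq:
  fixes v :: "nat \<Rightarrow> 'v::real_inner"
  shows "(norm (\<Sum>h<s. v h))\<^sup>2 \<le> real s * (\<Sum>h<s. (norm (v h))\<^sup>2)"
proof -
  have "norm (\<Sum>h<s. v h) \<le> (\<Sum>h<s. norm (v h))" by (rule norm_sum)
  hence "(norm (\<Sum>h<s. v h))\<^sup>2 \<le> (\<Sum>h<s. norm (v h))\<^sup>2"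
    by (simp add: power_mono)
  also have "\<dots> = (\<Sum>h<s. 1 * norm (v h))\<^sup>2" by simp
  also have "\<dots> \<le> (\<Sum>h<s. 1\<^sup>2) * (\<Sum>h<s. (norm (v h))\<^sup>2)"
    by (rule Cauchy_Schwarz_ineq_sum)
  finally show ?thesis by simp
qed

lemma var_le_second:
  fixes X :: "nat \<Rightarrow> 'v::real_inner"
  assumes "finite S" "card S = r" "0 < r"
  shows "(\<Sum>i\<in>S. (norm ((1 / real r) *\<^sub>R (\<Sum>i'\<in>S. X i') - X i))\<^sup>2) \<le> (\<Sum>i\<in>S. (norm (X i))\<^sup>2)"
proof -
  define m where "m = (1 / real r) *\<^sub>R (\<Sum>i'\<in>S. X i')"
  have sm: "(\<Sum>i\<in>S. X i) = real r *\<^sub>R m" using assms by (simp add: m_def)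
  have "(\<Sum>i\<in>S. (norm (m - X i))\<^sup>2) = (\<Sum>i\<in>S. (norm m)\<^sup>2 - 2 * (m \<bullet> X i) + (norm (X i))\<^sup>2)"
    by (intro sum.cong refl) (simp add: power2_norm_eq_inner inner_diff_left inner_diff_right inner_commute)
  also have "\<dots> = real r * (norm m)\<^sup>2 - 2 * (m \<bullet> (\<Sum>i\<in>S. X i)) + (\<Sum>i\<in>S. (norm (X i))\<^sup>2)"
    using assms by (simp add: sum.distrib sum_subtractf inner_sum_right sum_distrib_left)
  also have "\<dots> = (\<Sum>i\<in>S. (norm (X i))\<^sup>2) - real r * (norm m)\<^sup>2"
    by (simp add: sm power2_norm_eq_inner)
  finally show ?thesis unfolding m_def[symmetric] by simp
qed

lemma pw_bound:
  fixes X Y Z :: "nat \<Rightarrow> 'v::real_inner" and th :: "nat \<Rightarrow> 'v"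
  assumes "finite S" "card S = r" "0 < r"
    and th: "\<And>i. i \<in> S \<Longrightarrow> th i = c - \<eta> *\<^sub>R (X i + Y i + Z i)"
  shows "(1 / real r) * (\<Sum>i\<in>S. (norm ((1 / real r) *\<^sub>R (\<Sum>i'\<in>S. th i') - th i))\<^sup>2)
     \<le> (\<Sum>i\<in>S. (\<eta>\<^sup>2 / real r) * (4 * (norm (X i))\<^sup>2 + 4 * (norm (Y i))\<^sup>2 + 2 * (norm (Z i))\<^sup>2))"
proof -
  define mX where "mX = (1 / real r) *\<^sub>R (\<Sum>i'\<in>S. X i')"
  define mY where "mY = (1 / real r) *\<^sub>R (\<Sum>i'\<in>S. Y i')"
  define mZ where "mZ = (1 / real r) *\<^sub>R (\<Sum>i'\<in>S. Z i')"
  have eq: "(1 / real r) *\<^sub>R (\<Sum>i'\<in>S. th i') - th i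
       = \<eta> *\<^sub>R ((X i - mX) + (Y i - mY) + (Z i - mZ))" if "i \<in> S" for i
  proof -
    have "(\<Sum>i'\<in>S. th i') = (\<Sum>i'\<in>S. c - \<eta> *\<^sub>R (X i' + Y i' + Z i'))"
      using th by (intro sum.cong) auto
    also have "\<dots> = real r *\<^sub>R c - \<eta> *\<^sub>R ((\<Sum>i'\<in>S. X i') + (\<Sum>i'\<in>S. Y i') + (\<Sum>i'\<in>S. Z i'))"
      using assms by (simp add: sum_subtractf scaleR_sum_right[symmetric] sum.distrib sum_constant_scaleR)
    finally have st: "(\<Sum>i'\<in>S. th i') = real r *\<^sub>R c - \<eta> *\<^sub>R ((\<Sum>i'\<in>S. X i') + (\<Sum>i'\<in>S. Y i') + (\<Sum>i'\<in>S. Z i'))" .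
    have rr: "(1 / real r) *\<^sub>R (real r *\<^sub>R c) = c" using assms by (simp add: scaleR_scaleR)
    show ?thesis unfolding st th[OF that] mX_def mY_def mZ_def
      by (simp only: scaleR_diff_right rr scaleR_scaleR scaleR_add_right) (use assms(3) in \<open>simp add: algebra_simps\<close>)
  qed
  have "(\<Sum>i\<in>S. (norm ((1 / real r) *\<^sub>R (\<Sum>i'\<in>S. th i') - th i))\<^sup>2)
      = (\<Sum>i\<in>S. \<eta>\<^sup>2 * (norm ((X i - mX) + (Y i - mY) + (Z i - mZ)))\<^sup>2)"
    by (intro sum.cong refl) (simp add: eq power_mult_distrib)
  also have "\<dots> \<le> (\<Sum>i\<in>S. \<eta>\<^sup>2 * (4 * (norm (X i - mX))\<^sup>2 + 4 * (norm (Y i - mY))\<^sup>2 + 2 * (norm (Z i - mZ))\<^sup>2))"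
    by (intro sum_mono mult_left_mono norm3_bound) auto
  also have "\<dots> = \<eta>\<^sup>2 * (4 * (\<Sum>i\<in>S. (norm (mX - X i))\<^sup>2) + 4 * (\<Sum>i\<in>S. (norm (mY - Y i))\<^sup>2) + 2 * (\<Sum>i\<in>S. (norm (mZ - Z i))\<^sup>2))"
    by (simp add: sum_distrib_left sum.distrib norm_minus_commute algebra_simps)
  also have "\<dots> \<le> \<eta>\<^sup>2 * (4 * (\<Sum>i\<in>S. (norm (X i))\<^sup>2) + 4 * (\<Sum>i\<in>S. (norm (Y i))\<^sup>2) + 2 * (\<Sum>i\<in>S. (norm (Z i))\<^sup>2))"
    unfolding mX_def mY_def mZ_def
    using var_le_second[OF assms(1-3), of X] var_le_second[OF assms(1-3), of Y] var_le_second[OF assms(1-3), of Z]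
    by (intro mult_left_mono) auto
  finally have "(\<Sum>i\<in>S. (norm ((1 / real r) *\<^sub>R (\<Sum>i'\<in>S. th i') - th i))\<^sup>2) \<le> \<eta>\<^sup>2 * (4 * (\<Sum>i\<in>S. (norm (X i))\<^sup>2) + 4 * (\<Sum>i\<in>S. (norm (Y i))\<^sup>2) + 2 * (\<Sum>i\<in>S. (norm (Z i))\<^sup>2))" .
  hence "(1 / real r) * (\<Sum>i\<in>S. (norm ((1 / real r) *\<^sub>R (\<Sum>i'\<in>S. th i') - th i))\<^sup>2)
     \<le> (1 / real r) * (\<eta>\<^sup>2 * (4 * (\<Sum>i\<in>S. (norm (X i))\<^sup>2) + 4 * (\<Sum>i\<in>S. (norm (Y i))\<^sup>2) + 2 * (\<Sum>i\<in>S. (norm (Z i))\<^sup>2)))"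
    using assms by (intro mult_left_mono) auto
  also have "\<dots> = (\<Sum>i\<in>S. (\<eta>\<^sup>2 / real r) * (4 * (norm (X i))\<^sup>2 + 4 * (norm (Y i))\<^sup>2 + 2 * (norm (Z i))\<^sup>2))"
    by (simp add: sum_distrib_left sum.distrib algebra_simps)
  finally show ?thesis .
qed

lemma traj_cong:
  assumes "\<And>h' j. h' < h \<Longrightarrow> j < \<gamma> \<Longrightarrow> \<xi> i h' j \<omega> = \<xi>' i h' j \<omega>'"
    and "\<And>h'. h' < h \<Longrightarrow> b i h' \<omega> = b' i h' \<omega>'"
  shows "traj \<eta> \<gamma> gl \<theta>0 \<xi> b i h \<omega> = traj \<eta> \<gamma> gl \<theta>0 \<xi>' b' i h \<omega>'"
  using assms by (induction h) auto

lemma traj_sum: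
  "traj \<eta> \<gamma> gl \<theta>0 \<xi> b i s \<omega> = \<theta>0 - \<eta> *\<^sub>R (\<Sum>h<s. (1 / real \<gamma>) *\<^sub>R (\<Sum>j<\<gamma>. gl (traj \<eta> \<gamma> gl \<theta>0 \<xi> b i h \<omega>) (\<xi> i h j \<omega>)) + b i h \<omega>)"
  by (induction s) (auto simp: algebra_simps scaleR_add_right)


lemma deriv_meas:
  fixes f :: "real^'d \<Rightarrow> real" and g :: "real^'d \<Rightarrow> real^'d"
  assumes der: "\<And>\<theta>. (f has_derivative (\<lambda>v. g \<theta> \<bullet> v)) (at \<theta>)"
  shows "g \<in> borel_measurable borel"
proof -
  have "continuous_on UNIV f"
    by (intro continuous_at_imp_continuous_on ballI has_derivative_continuous[OF der])
  hence fm: "f \<in> borel_measurable borel" by (rule borel_measurable_continuous_onI)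
  show ?thesis
  proof (rule borel_measurable_euclidean_space[THEN iffD2], rule ballI)
    fix e :: "real^'d" assume "e \<in> Basis"
    define u where "u m \<theta> = (f (\<theta> + (1 / Suc m) *\<^sub>R e) - f \<theta>) / (1 / Suc m)" for m \<theta>
    show "(\<lambda>\<theta>. g \<theta> \<bullet> e) \<in> borel_measurable borel"
    proof (rule borel_measurable_LIMSEQ_real[where u=u])
      fix m
      have "(\<lambda>\<theta>. \<theta> + (1 / Suc m) *\<^sub>R e) \<in> borel_measurable borel"
        by (intro borel_measurable_continuous_onI continuous_intros)
      hence "(\<lambda>\<theta>. f (\<theta> + (1 / Suc m) *\<^sub>R e)) \<in> borel_measurable borel"
        using fm by (rule measurable_compose)
      thus "u m \<in> borel_measurable borel" unfolding u_def using fm by measurable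
    next
      fix \<theta> :: "real^'d"
      define \<phi> where "\<phi> t = f (\<theta> + t *\<^sub>R e)" for t :: real
      have "((\<lambda>t. \<theta> + t *\<^sub>R e) has_derivative (\<lambda>t. t *\<^sub>R e)) (at 0)"
        by (auto intro!: derivative_eq_intros)
      moreover have "(f has_derivative (\<lambda>v. g \<theta> \<bullet> v)) (at (\<theta> + 0 *\<^sub>R e))"
        using der by simp
      ultimately have "(\<phi> has_derivative (\<lambda>t. g \<theta> \<bullet> (t *\<^sub>R e))) (at 0)"
        unfolding \<phi>_def by (rule has_derivative_compose)
      moreover have "(\<lambda>t. g \<theta> \<bullet> (t *\<^sub>R e)) = (*) (g \<theta> \<bullet> e)"
        by (auto simp: fun_eq_iff)
      ultimately have "(\<phi> has_field_derivative (g \<theta> \<bullet> e)) (at 0)"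
        by (simp add: has_field_derivative_def mult.commute)
      hence lim: "((\<lambda>y. (\<phi> y - \<phi> 0) / (y - 0)) \<longlongrightarrow> g \<theta> \<bullet> e) (at 0)"
        by (simp add: has_field_derivative_iff)
      have sq: "filterlim (\<lambda>m::nat. 1 / real (Suc m)) (at 0) sequentially"
        unfolding filterlim_at
        by (auto intro!: LIMSEQ_Suc[OF lim_const_over_n[of 1]] simp del: of_nat_Suc)
      have "(\<lambda>m. (\<phi> (1 / real (Suc m)) - \<phi> 0) / (1 / real (Suc m) - 0)) \<longlonglongrightarrow> g \<theta> \<bullet> e"
        by (rule filterlim_compose[OF lim sq])
      thus "(\<lambda>m. u m \<theta>) \<longlonglongrightarrow> g \<theta> \<bullet> e"
        unfolding u_def \<phi>_def by simp
    qed
  qed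
qed

lemma distr_measurable:
  assumes P: "prob_space M" and eq: "distr M N f = Q" and Q: "prob_space Q"
    and into: "\<And>x. x \<in> space M \<Longrightarrow> f x \<in> space N"
  shows "f \<in> measurable M N"
proof -
  define \<mu> where "\<mu> A = emeasure M (f -` A \<inter> space M)" for A
  have sQ: "sets Q = sets N" "space Q = space N"
    using eq[symmetric] by (auto simp: sets_distr space_distr)
  have "emeasure (distr M N f) (space N) = 1"
    using eq Q sQ prob_space.emeasure_space_1[OF Q] by simp
  have ms: "measure_space (space N) (sets N) \<mu>"
  proof (rule ccontr)
    assume "\<not> ?thesis"
    hence "emeasure (distr M N f) (space N) = 0"
      unfolding distr_def \<mu>_def
      by (simp add: emeasure_measure_of_conv sets.sigma_sets_eq)
    with \<open>emeasure (distr M N f) (space N) = 1\<close> show False by simp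
  qed
  have em: "emeasure Q A = \<mu> A" if "A \<in> sets N" for A
    using that ms unfolding eq[symmetric] distr_def \<mu>_def
    by (simp add: emeasure_measure_of_conv sets.sigma_sets_eq)
  show ?thesis
  proof (rule measurableI)
    show "f x \<in> space N" if "x \<in> space M" for x using into that .
    fix A assume A: "A \<in> sets N"
    show "f -` A \<inter> space M \<in> sets M"
    proof (rule ccontr)
      assume nA: "f -` A \<inter> space M \<notin> sets M"
      hence "\<mu> A = 0" unfolding \<mu>_def by (rule emeasure_notin_sets)
      have Ac: "space N - A \<in> sets N" using A by auto
      have un: "A \<union> (space N - A) = space N" using sets.sets_into_space[OF A] by auto
      have "emeasure Q A + emeasure Q (space N - A) = emeasure Q (A \<union> (space N - A))"
        using A Ac sQ by (intro plus_emeasure) auto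
      also have "\<dots> = emeasure Q (space N)" unfolding un ..
      finally have "emeasure Q A + emeasure Q (space N - A) = emeasure Q (space N)" .
      also have "\<dots> = 1" using Q sQ prob_space.emeasure_space_1[OF Q] by simp
      finally have "\<mu> (space N - A) = 1" using em[OF A] em[OF Ac] \<open>\<mu> A = 0\<close> by simp
      hence "f -` (space N - A) \<inter> space M \<in> sets M"
        unfolding \<mu>_def using emeasure_notin_sets by force
      moreover have "f -` A \<inter> space M = space M - (f -` (space N - A) \<inter> space M)"
        using into by auto
      ultimately show False using nA by auto
    qed
  qed
qed


lemma pmf_comp_meas: "i \<in> I \<Longrightarrow> (\<lambda>x. u (x i)) \<in> borel_measurable (PiM I (\<lambda>_. measure_pmf p))"
  by (rule measurable_compose[where f="\<lambda>x. x i" and N="measure_pmf p"])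
     (auto intro: measurable_component_singleton)

lemma var_sum:
  fixes u :: "'x \<Rightarrow> 'v::euclidean_space" and K :: "'k set"
  assumes Dd: "finite Dd" "Dd \<noteq> {}"
    and u0: "(\<Sum>z\<in>Dd. u z) = 0"
    and uB: "(\<Sum>z\<in>Dd. (norm (u z))\<^sup>2) \<le> real (card Dd) * B"
    and K: "finite K"
  shows "(\<integral>\<^sup>+y. ennreal ((norm (\<Sum>k\<in>K. u (y k)))\<^sup>2) \<partial>PiM K (\<lambda>_. measure_pmf (pmf_of_set Dd)))
         \<le> ennreal (real (card K) * B)"
  using K
proof (induction K rule: finite_induct)
  case empty thus ?case by simp
next
  case (insert k K)
  let ?Q = "measure_pmf (pmf_of_set Dd)"
  interpret product_prob_space "\<lambda>_::'k. ?Q" K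
    by unfold_locales (simp add: prob_space_measure_pmf)
  have cD: "0 < card Dd" using Dd by (simp add: card_gt_0_iff)
  have B0: "0 \<le> B"
  proof -
    have "0 \<le> (\<Sum>z\<in>Dd. (norm (u z))\<^sup>2)" by (intro sum_nonneg) auto
    hence "0 \<le> real (card Dd) * B" using uB by linarith
    with cD show ?thesis by (simp add: zero_le_mult_iff)
  qed
  have um[measurable]: "u \<in> measurable ?Q borel" by simp
  have "(\<integral>\<^sup>+y. ennreal ((norm (\<Sum>k'\<in>insert k K. u (y k')))\<^sup>2) \<partial>PiM (insert k K) (\<lambda>_. ?Q))
      = (\<integral>\<^sup>+x. (\<integral>\<^sup>+y. ennreal ((norm (\<Sum>k'\<in>insert k K. u ((x(k := y)) k')))\<^sup>2) \<partial>?Q) \<partial>PiM K (\<lambda>_. ?Q))"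
  proof (rule product_nn_integral_insert[OF insert(1,2)])
    have [measurable]: "(\<lambda>x. \<Sum>k'\<in>insert k K. u (x k')) \<in> borel_measurable (PiM (insert k K) (\<lambda>_. ?Q))"
      by (intro borel_measurable_sum pmf_comp_meas) auto
    show "(\<lambda>y. ennreal ((norm (\<Sum>k'\<in>insert k K. u (y k')))\<^sup>2)) \<in> borel_measurable (PiM (insert k K) (\<lambda>_. ?Q))"
      by measurable
  qed
  also have "\<dots> \<le> (\<integral>\<^sup>+x. ennreal ((norm (\<Sum>k'\<in>K. u (x k')))\<^sup>2) + ennreal B \<partial>PiM K (\<lambda>_. ?Q))"
  proof (rule nn_integral_mono)
    fix x
    define S where "S = (\<Sum>k'\<in>K. u (x k'))"
    have eq: "(\<Sum>k'\<in>insert k K. u ((x(k := y)) k')) = u y + S" for y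
      using insert unfolding S_def by (auto intro!: sum.cong)
    have "(\<integral>\<^sup>+y. ennreal ((norm (\<Sum>k'\<in>insert k K. u ((x(k := y)) k')))\<^sup>2) \<partial>?Q)
        = (\<Sum>z\<in>Dd. ennreal ((norm (u z + S))\<^sup>2)) / card Dd"
      unfolding eq by (rule nn_integral_pmf_of_set[OF Dd(2,1)])
    also have "\<dots> = ennreal ((\<Sum>z\<in>Dd. (norm (u z + S))\<^sup>2) / card Dd)"
      using cD by (simp add: sum_ennreal ennreal_of_nat_eq_real_of_nat divide_ennreal sum_nonneg)
    also have "\<dots> \<le> ennreal ((norm S)\<^sup>2 + B)"
    proof (rule ennreal_leI)
      have "(\<Sum>z\<in>Dd. (norm (u z + S))\<^sup>2) = (\<Sum>z\<in>Dd. (norm (u z))\<^sup>2 + 2 * (S \<bullet> u z) + (norm S)\<^sup>2)"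
        by (intro sum.cong refl) (simp add: power2_norm_eq_inner inner_add_left inner_add_right inner_commute)
      also have "\<dots> = (\<Sum>z\<in>Dd. (norm (u z))\<^sup>2) + 2 * (S \<bullet> (\<Sum>z\<in>Dd. u z)) + real (card Dd) * (norm S)\<^sup>2"
        by (simp add: sum.distrib inner_sum_right sum_distrib_left)
      also have "\<dots> \<le> real (card Dd) * ((norm S)\<^sup>2 + B)"
        using uB u0 by (simp add: algebra_simps)
      finally show "(\<Sum>z\<in>Dd. (norm (u z + S))\<^sup>2) / card Dd \<le> (norm S)\<^sup>2 + B"
        using cD by (simp add: divide_le_eq mult.commute)
    qed
    also have "\<dots> = ennreal ((norm S)\<^sup>2) + ennreal B" using B0 by (simp add: ennreal_plus)
    finally show "(\<integral>\<^sup>+y. ennreal ((norm (\<Sum>k'\<in>insert k K. u ((x(k := y)) k')))\<^sup>2) \<partial>?Q)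
        \<le> ennreal ((norm (\<Sum>k'\<in>K. u (x k')))\<^sup>2) + ennreal B" unfolding S_def .
  qed
  also have "\<dots> = (\<integral>\<^sup>+x. ennreal ((norm (\<Sum>k'\<in>K. u (x k')))\<^sup>2) \<partial>PiM K (\<lambda>_. ?Q)) + ennreal B"
  proof -
    have [measurable]: "(\<lambda>x. \<Sum>k'\<in>K. u (x k')) \<in> borel_measurable (PiM K (\<lambda>_. ?Q))"
      by (intro borel_measurable_sum pmf_comp_meas) auto
    show ?thesis
      by (subst nn_integral_add) (auto simp: emeasure_space_1)
  qed
  also have "\<dots> \<le> ennreal (real (card K) * B) + ennreal B"
    using insert.IH by (rule add_right_mono)
  also have "\<dots> = ennreal (real (card K) * B + B)"
    using B0 by (intro ennreal_plus[symmetric]) auto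
  also have "\<dots> = ennreal (real (card (insert k K)) * B)"
    using insert by (simp add: algebra_simps)
  finally show ?case .
qed

locale canon =
  fixes n \<tau> \<gamma> :: nat and \<eta> :: real and \<theta>0 :: "real^'d"
    and D :: "nat \<Rightarrow> 'x set" and gl :: "real^'d \<Rightarrow> 'x \<Rightarrow> real^'d"
    and gf :: "nat \<Rightarrow> real^'d \<Rightarrow> real^'d" and \<beta> :: real
  assumes Dfin: "\<And>i. i < n \<Longrightarrow> finite (D i) \<and> D i \<noteq> {}"
    and glm: "\<And>i z. i < n \<Longrightarrow> z \<in> D i \<Longrightarrow> (\<lambda>\<theta>. gl \<theta> z) \<in> borel_measurable borel"
    and unb: "\<And>i x. i < n \<Longrightarrow>
                   measure_pmf.expectation (pmf_of_set (D i)) (\<lambda>z. gl x z) = gf i x"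
    and bv: "\<And>i x. i < n \<Longrightarrow>
                   measure_pmf.expectation (pmf_of_set (D i)) (\<lambda>z. (norm (gl x z - gf i x))\<^sup>2) \<le> \<beta>\<^sup>2"
begin

definition "I1 = {(i, h, j). i < n \<and> h < \<tau> \<and> j < \<gamma>}"
definition "I2 = {(i, h). i < n \<and> h < \<tau>}"
definition "Sp = PiM I1 (\<lambda>_. count_space (UNIV :: 'x set))
          \<Otimes>\<^sub>M (PiM I2 (\<lambda>_. (borel :: (real^'d) measure)) \<Otimes>\<^sub>M count_space (UNIV :: nat set set))"
definition cl :: "nat \<Rightarrow> 'x \<Rightarrow> 'x" where "cl i x = (if x \<in> D i then x else (SOME z. z \<in> D i))"
definition cxi :: "nat \<Rightarrow> nat \<Rightarrow> nat \<Rightarrow> ((nat \<times> nat \<times> nat \<Rightarrow> 'x) \<times> (nat \<times> nat \<Rightarrow> real^'d) \<times> nat set) \<Rightarrow> 'x"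
  where "cxi i h j w = cl i (fst w (i, h, j))"
definition cb :: "nat \<Rightarrow> nat \<Rightarrow> ((nat \<times> nat \<times> nat \<Rightarrow> 'x) \<times> (nat \<times> nat \<Rightarrow> real^'d) \<times> nat set) \<Rightarrow> real^'d"
  where "cb i h w = fst (snd w) (i, h)"
definition "ct = traj \<eta> \<gamma> gl \<theta>0 cxi cb"

lemma cl_in: "i < n \<Longrightarrow> cl i x \<in> D i"
  using Dfin[of i] by (auto simp: cl_def intro: someI_ex)

lemma cl_id: "x \<in> D i \<Longrightarrow> cl i x = x"
  by (simp add: cl_def)

lemma cxi_meas: "(i, h, j) \<in> I1 \<Longrightarrow> cxi i h j \<in> measurable Sp (count_space UNIV)"
  unfolding cxi_def Sp_def
  by (rule measurable_compose[where f="\<lambda>w. fst w (i,h,j)"])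
     (auto intro!: measurable_compose[OF measurable_fst] measurable_component_singleton)

lemma cb_meas: "(i, h) \<in> I2 \<Longrightarrow> cb i h \<in> borel_measurable Sp"
  unfolding cb_def Sp_def
  by (rule measurable_compose[where f="\<lambda>w. fst (snd w)"])
     (auto intro!: measurable_compose[OF measurable_snd] measurable_fst measurable_component_singleton)

lemma gl_cxi_meas:
  assumes "(i, h, j) \<in> I1" and t: "t \<in> borel_measurable Sp"
  shows "(\<lambda>w. gl (t w) (cxi i h j w)) \<in> borel_measurable Sp"
proof -
  have i: "i < n" using assms by (auto simp: I1_def)
  have "(\<lambda>w. gl (t w) (cxi i h j w)) = (\<lambda>w. \<Sum>z\<in>D i. (if cxi i h j w = z then 1 else 0) *\<^sub>R gl (t w) z)"
  proof
    fix w
    have "(\<Sum>z\<in>D i. (if cxi i h j w = z then 1 else 0) *\<^sub>R gl (t w) z)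
        = (\<Sum>z\<in>D i. if cxi i h j w = z then gl (t w) z else 0)"
      by (intro sum.cong) auto
    also have "\<dots> = gl (t w) (cxi i h j w)"
      using Dfin[OF i] cl_in[OF i] by (simp add: sum.delta' cxi_def)
    finally show "gl (t w) (cxi i h j w) = (\<Sum>z\<in>D i. (if cxi i h j w = z then 1 else 0) *\<^sub>R gl (t w) z)" ..
  qed
  also have "\<dots> \<in> borel_measurable Sp"
  proof (intro borel_measurable_sum borel_measurable_scaleR)
    fix z assume z: "z \<in> D i"
    have [measurable]: "cxi i h j \<in> measurable Sp (count_space UNIV)" using assms(1) by (rule cxi_meas)
    show "(\<lambda>w. if cxi i h j w = z then 1 else 0 :: real) \<in> borel_measurable Sp" by measurable
    show "(\<lambda>w. gl (t w) z) \<in> borel_measurable Sp"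
      using t glm[OF i z] by (rule measurable_compose)
  qed
  finally show ?thesis .
qed

lemma ct_meas: "i < n \<Longrightarrow> h \<le> \<tau> \<Longrightarrow> ct i h \<in> borel_measurable Sp"
proof (induction h)
  case 0 thus ?case by (simp add: ct_def)
next
  case (Suc h)
  have m: "ct i h \<in> borel_measurable Sp" using Suc by simp
  have "(\<lambda>w. ct i (Suc h) w) = (\<lambda>w. ct i h w - \<eta> *\<^sub>R ((1 / real \<gamma>) *\<^sub>R (\<Sum>j<\<gamma>. gl (ct i h w) (cxi i h j w)) + cb i h w))"
    by (simp add: ct_def)
  also have "\<dots> \<in> borel_measurable Sp"
  proof (intro borel_measurable_diff borel_measurable_scaleR borel_measurable_add borel_measurable_sum
      borel_measurable_const m)
    show "(\<lambda>w. gl (ct i h w) (cxi i h j w)) \<in> borel_measurable Sp" if "j \<in> {..<\<gamma>}" for j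
      using Suc that by (intro gl_cxi_meas m) (auto simp: I1_def)
    show "cb i h \<in> borel_measurable Sp" using Suc by (intro cb_meas) (auto simp: I2_def)
  qed
  finally show ?case by simp
qed

end

lemma of_nat_vec_mult[simp]: "(of_nat k :: real^'d) * v = real k *\<^sub>R v"
  by (simp add: vec_eq_iff of_nat_index)

context canon begin

lemma gf_eq: "i < n \<Longrightarrow> gf i t = (1 / real (card (D i))) *\<^sub>R (\<Sum>z\<in>D i. gl t z)"
proof -
  assume i: "i < n"
  have f: "finite (D i)" "D i \<noteq> {}" using Dfin[OF i] by auto
  have "gf i t = measure_pmf.expectation (pmf_of_set (D i)) (\<lambda>z. gl t z)" using unb[OF i] by simp
  also have "\<dots> = (\<Sum>z\<in>D i. pmf (pmf_of_set (D i)) z *\<^sub>R gl t z)"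
    by (rule integral_measure_pmf[OF f(1)]) (use f in auto)
  also have "\<dots> = (\<Sum>z\<in>D i. (1 / real (card (D i))) *\<^sub>R gl t z)"
    using f by (intro sum.cong) auto
  finally show ?thesis by (simp add: scaleR_sum_right)
qed

lemma gf_meas: "i < n \<Longrightarrow> gf i \<in> borel_measurable borel"
proof -
  assume i: "i < n"
  have "gf i = (\<lambda>t. (1 / real (card (D i))) *\<^sub>R (\<Sum>z\<in>D i. gl t z))" using gf_eq[OF i] by auto
  also have "\<dots> \<in> borel_measurable borel"
    by (intro borel_measurable_scaleR borel_measurable_const borel_measurable_sum glm[OF i])
  finally show ?thesis .
qed

lemma u0: "i < n \<Longrightarrow> (\<Sum>z\<in>D i. gl t z - gf i t) = 0"
proof -
  assume i: "i < n"
  have f: "finite (D i)" "D i \<noteq> {}" using Dfin[OF i] by auto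
  hence c: "real (card (D i)) > 0" by (simp add: card_gt_0_iff)
  have s1: "(\<Sum>z\<in>D i. gf i t) = real (card (D i)) *\<^sub>R gf i t" by (rule sum_constant_scaleR)
  have s2: "real (card (D i)) *\<^sub>R gf i t = (\<Sum>z\<in>D i. gl t z)" using c by (simp add: gf_eq[OF i])
  show ?thesis by (simp add: sum_subtractf s1 s2)
qed

lemma uB: "i < n \<Longrightarrow> (\<Sum>z\<in>D i. (norm (gl t z - gf i t))\<^sup>2) \<le> real (card (D i)) * \<beta>\<^sup>2"
proof -
  assume i: "i < n"
  have f: "finite (D i)" "D i \<noteq> {}" using Dfin[OF i] by auto
  hence c: "real (card (D i)) > 0" by (simp add: card_gt_0_iff)
  have "(\<Sum>z\<in>D i. (norm (gl t z - gf i t))\<^sup>2) / real (card (D i)) \<le> \<beta>\<^sup>2"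
    using bv[OF i, of t] by (simp add: integral_pmf_of_set[OF f(2,1)])
  thus ?thesis using c by (simp add: divide_le_eq mult.commute)
qed

lemma K3_inner:
  assumes i: "i < n" and g: "0 < \<gamma>"
  shows "(\<integral>\<^sup>+z. ennreal ((norm ((1 / real \<gamma>) *\<^sub>R (\<Sum>j<\<gamma>. gl t (cl i (z (i, h, j)))) - gf i t))\<^sup>2)
           \<partial>PiM ((\<lambda>j. (i, h, j)) ` {..<\<gamma>}) (\<lambda>_. measure_pmf (pmf_of_set (D i))))
         \<le> ennreal (\<beta>\<^sup>2 / real \<gamma>)"
proof -
  let ?J = "(\<lambda>j. (i, h, j)) ` {..<\<gamma>}"
  let ?Q = "measure_pmf (pmf_of_set (D i))"
  define u where "u x = gl t (cl i x) - gf i t" for x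
  have f: "finite (D i)" "D i \<noteq> {}" using Dfin[OF i] by auto
  have inj: "inj_on (\<lambda>j. (i, h, j)) {..<\<gamma>}" by (auto simp: inj_on_def)
  have cJ: "card ?J = \<gamma>" using inj by (simp add: card_image)
  have eq: "(1 / real \<gamma>) *\<^sub>R (\<Sum>j<\<gamma>. gl t (cl i (z (i, h, j)))) - gf i t
         = (1 / real \<gamma>) *\<^sub>R (\<Sum>k\<in>?J. u (z k))" for z
  proof -
    have "(\<Sum>k\<in>?J. u (z k)) = (\<Sum>j<\<gamma>. u (z (i, h, j)))"
      using inj by (simp add: sum.reindex)
    also have "\<dots> = (\<Sum>j<\<gamma>. gl t (cl i (z (i, h, j)))) - real \<gamma> *\<^sub>R gf i t"
      by (simp add: u_def sum_subtractf sum_constant_scaleR)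
    finally have e: "(\<Sum>k\<in>?J. u (z k)) = (\<Sum>j<\<gamma>. gl t (cl i (z (i, h, j)))) - real \<gamma> *\<^sub>R gf i t" .
    show ?thesis unfolding e using g by (simp add: scaleR_diff_right)
  qed
  have sq: "(norm ((1 / real \<gamma>) *\<^sub>R v))\<^sup>2 = (1 / real \<gamma>)\<^sup>2 * (norm v)\<^sup>2" for v :: "real^'d"
    by (simp add: power_divide)
  have [measurable]: "(\<lambda>z. \<Sum>k\<in>?J. u (z k)) \<in> borel_measurable (PiM ?J (\<lambda>_. ?Q))"
    by (intro borel_measurable_sum pmf_comp_meas) auto
  have "(\<integral>\<^sup>+z. ennreal ((norm ((1 / real \<gamma>) *\<^sub>R (\<Sum>j<\<gamma>. gl t (cl i (z (i, h, j)))) - gf i t))\<^sup>2) \<partial>PiM ?J (\<lambda>_. ?Q))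
      = (\<integral>\<^sup>+z. ennreal ((1 / real \<gamma>)\<^sup>2) * ennreal ((norm (\<Sum>k\<in>?J. u (z k)))\<^sup>2) \<partial>PiM ?J (\<lambda>_. ?Q))"
    unfolding eq sq by (intro nn_integral_cong) (simp add: ennreal_mult)
  also have "\<dots> = ennreal ((1 / real \<gamma>)\<^sup>2) * (\<integral>\<^sup>+z. ennreal ((norm (\<Sum>k\<in>?J. u (z k)))\<^sup>2) \<partial>PiM ?J (\<lambda>_. ?Q))"
    by (rule nn_integral_cmult) measurable
  also have "\<dots> \<le> ennreal ((1 / real \<gamma>)\<^sup>2) * ennreal (real (card ?J) * \<beta>\<^sup>2)"
  proof (intro mult_left_mono var_sum f)
    show "(\<Sum>z\<in>D i. u z) = 0" using u0[OF i, of t] by (simp add: u_def cl_id)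
    show "(\<Sum>z\<in>D i. (norm (u z))\<^sup>2) \<le> real (card (D i)) * \<beta>\<^sup>2"
      using uB[OF i, of t] by (simp add: u_def cl_id)
  qed auto
  also have "\<dots> = ennreal (\<beta>\<^sup>2 / real \<gamma>)"
    using g by (simp add: cJ ennreal_mult[symmetric] power2_eq_square)
  finally show ?thesis .
qed

end


lemma count_subs:
  assumes i: "i < n" and r: "0 < r" "r \<le> n"
  shows "real (card ({S. S \<subseteq> {..<n} \<and> card S = r} \<inter> {S. i \<in> S})) / real (card {S. S \<subseteq> {..<n} \<and> card S = r})
       = real r / real n"
proof -
  let ?U = "{U. U \<subseteq> {..<n} - {i} \<and> card U = r - 1}"
  have A: "{S. S \<subseteq> {..<n} \<and> card S = r} \<inter> {S. i \<in> S} = insert i ` ?U"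
  proof (intro equalityI subsetI)
    fix S assume S: "S \<in> {S. S \<subseteq> {..<n} \<and> card S = r} \<inter> {S. i \<in> S}"
    hence fS: "finite S" by (auto intro: finite_subset)
    show "S \<in> insert i ` ?U"
    proof (rule rev_image_eqI[of "S - {i}"])
      show "S - {i} \<in> ?U" using S fS by (auto simp: card_Diff_singleton)
      show "S = insert i (S - {i})" using S by auto
    qed
  next
    fix S assume "S \<in> insert i ` ?U"
    then obtain U where U: "U \<subseteq> {..<n} - {i}" "card U = r - 1" and S: "S = insert i U" by auto
    have fU: "finite U" using U by (auto intro: finite_subset)
    have "i \<notin> U" using U by auto
    hence "card S = Suc (card U)" using fU S by simp
    hence "card S = r" using U r by simp
    thus "S \<in> {S. S \<subseteq> {..<n} \<and> card S = r} \<inter> {S. i \<in> S}" using S U i by auto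
  qed
  have inj: "inj_on (insert i) ?U"
  proof (rule inj_onI)
    fix U V assume "U \<in> ?U" "V \<in> ?U" "insert i U = insert i V"
    hence "i \<notin> U" "i \<notin> V" and e: "insert i U = insert i V" by auto
    hence "U = insert i U - {i}" "V = insert i V - {i}" by auto
    thus "U = V" using e by simp
  qed
  have c1: "card ({S. S \<subseteq> {..<n} \<and> card S = r} \<inter> {S. i \<in> S}) = (n - 1) choose (r - 1)"
    unfolding A card_image[OF inj] using i by (subst n_subsets) auto
  have c2: "card {S. S \<subseteq> {..<n} \<and> card S = r} = n choose r" by (subst n_subsets) auto
  have key: "r * (n choose r) = n * ((n - 1) choose (r - 1))" using r(1) by (rule times_binomial_minus1_eq)
  have pos: "0 < n choose r" using r by simp
  have key': "real r * real (n choose r) = real n * real ((n - 1) choose (r - 1))"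
    using key by (metis of_nat_mult)
  have n0: "real n > 0" using i by simp
  have b0: "real (n choose r) > 0" using pos by simp
  show ?thesis unfolding c1 c2
    by (rule frac_eq_eq[THEN iffD2]) (use n0 b0 key' in \<open>auto simp: mult.commute\<close>)
qed


locale canon2 = canon n \<tau> \<gamma> \<eta> \<theta>0 D gl gf \<beta> for n \<tau> \<gamma> \<eta> and \<theta>0 :: "real^'d"
    and D :: "nat \<Rightarrow> 'x set" and gl gf \<beta> +
  fixes PB :: "((nat \<times> nat) \<Rightarrow> real^'d) measure" and r :: nat
  assumes PB: "prob_space PB" and setsPB: "sets PB = sets (PiM {(i, h). i < n \<and> h < \<tau>} (\<lambda>_. borel))"
    and r: "0 < r" "r \<le> n" and g: "0 < \<gamma>"
begin

definition "Subs = {S. S \<subseteq> {..<n} \<and> card S = r}"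
definition "M1 = (\<lambda>k::nat\<times>nat\<times>nat. measure_pmf (pmf_of_set (D (fst k))))"
definition "PA = PiM I1 M1"
definition "PC = measure_pmf (pmf_of_set Subs)"
definition "P = PA \<Otimes>\<^sub>M (PB \<Otimes>\<^sub>M PC)"

lemma Subs_fin: "finite Subs" "Subs \<noteq> {}"
proof -
  show "finite Subs" unfolding Subs_def
    by (rule finite_subset[of _ "Pow {..<n}"]) auto
  have "{..<r} \<in> Subs" using r by (auto simp: Subs_def)
  thus "Subs \<noteq> {}" by auto
qed

lemma prob_M1: "prob_space (M1 k)" by (simp add: M1_def prob_space_measure_pmf)
lemma prob_PA: "prob_space PA" unfolding PA_def by (intro prob_space_PiM prob_M1)
lemma prob_PC: "prob_space PC" unfolding PC_def by (simp add: prob_space_measure_pmf)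

lemma prob_Q: "prob_space (PB \<Otimes>\<^sub>M PC)"
proof -
  interpret a: prob_space PB by (rule PB)
  interpret b: prob_space PC by (rule prob_PC)
  interpret pair_prob_space PB PC ..
  show ?thesis by unfold_locales
qed

lemma prob_P: "prob_space P"
proof -
  interpret a: prob_space PA by (rule prob_PA)
  interpret b: prob_space "PB \<Otimes>\<^sub>M PC" by (rule prob_Q)
  interpret pair_prob_space PA "PB \<Otimes>\<^sub>M PC" ..
  show ?thesis unfolding P_def by unfold_locales
qed

lemma sets_PA: "sets PA = sets (PiM I1 (\<lambda>_. count_space UNIV))"
  unfolding PA_def M1_def by (intro sets_PiM_cong) auto

lemma sets_P: "sets P = sets Sp"
  unfolding P_def Sp_def
  by (intro sets_pair_measure_cong sets_PA) (auto simp: setsPB I2_def PC_def)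

lemma meas_P: "f \<in> borel_measurable Sp \<Longrightarrow> f \<in> borel_measurable P"
  using measurable_cong_sets[OF sets_P refl] by blast

lemma K3:
  assumes i: "i < n" and h: "h < \<tau>"
  shows "(\<integral>\<^sup>+w. ennreal ((norm ((1 / real \<gamma>) *\<^sub>R (\<Sum>j<\<gamma>. gl (ct i h w) (cxi i h j w)) - gf i (ct i h w)))\<^sup>2) \<partial>P)
         \<le> ennreal (\<beta>\<^sup>2 / real \<gamma>)"
proof -
  let ?Q = "PB \<Otimes>\<^sub>M PC"
  define f where "f w = ennreal ((norm ((1 / real \<gamma>) *\<^sub>R (\<Sum>j<\<gamma>. gl (ct i h w) (cxi i h j w)) - gf i (ct i h w)))\<^sup>2)" for w
  interpret a: prob_space PA by (rule prob_PA)
  interpret b: prob_space ?Q by (rule prob_Q)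
  interpret pair_prob_space PA ?Q ..
  have ctm: "ct i h \<in> borel_measurable Sp" using i h by (intro ct_meas) auto
  have "(\<lambda>w. (1 / real \<gamma>) *\<^sub>R (\<Sum>j<\<gamma>. gl (ct i h w) (cxi i h j w)) - gf i (ct i h w)) \<in> borel_measurable Sp"
  proof (intro borel_measurable_diff borel_measurable_scaleR borel_measurable_const borel_measurable_sum)
    show "(\<lambda>w. gl (ct i h w) (cxi i h j w)) \<in> borel_measurable Sp" if "j \<in> {..<\<gamma>}" for j
      using that i h by (intro gl_cxi_meas ctm) (auto simp: I1_def)
    show "(\<lambda>w. gf i (ct i h w)) \<in> borel_measurable Sp"
      using ctm gf_meas[OF i] by (rule measurable_compose)
  qed
  hence "f \<in> borel_measurable Sp" unfolding f_def by measurable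
  hence fm: "f \<in> borel_measurable (PA \<Otimes>\<^sub>M ?Q)" using meas_P unfolding P_def by blast
  have "(\<integral>\<^sup>+w. f w \<partial>P) = (\<integral>\<^sup>+y. (\<integral>\<^sup>+x. f (x, y) \<partial>PA) \<partial>?Q)"
    unfolding P_def by (rule nn_integral_snd[OF fm, symmetric])
  also have "\<dots> \<le> (\<integral>\<^sup>+y. ennreal (\<beta>\<^sup>2 / real \<gamma>) \<partial>?Q)"
  proof (rule nn_integral_mono)
    fix y assume y: "y \<in> space ?Q"
    define Jh where "Jh = (\<lambda>j. (i, h, j)) ` {..<\<gamma>}"
    define Ih where "Ih = I1 - Jh"
    have JI: "Jh \<subseteq> I1" using i h by (auto simp: Jh_def I1_def)
    have fin: "finite I1" unfolding I1_def
      by (rule finite_subset[of _ "{..<n} \<times> {..<\<tau>} \<times> {..<\<gamma>}"]) auto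
    have IJ: "Ih \<inter> Jh = {}" "finite Ih" "finite Jh" "Ih \<union> Jh = I1"
      using JI fin by (auto simp: Ih_def Jh_def)
    interpret ps: product_prob_space M1 I1
      by (intro product_prob_space.intro product_sigma_finite.intro product_prob_space_axioms.intro prob_M1 prob_space_imp_sigma_finite)
    have fxm: "(\<lambda>x. f (x, y)) \<in> borel_measurable (PiM (Ih \<union> Jh) M1)"
      using measurable_compose[OF measurable_Pair2'[OF y] fm] unfolding PA_def IJ(4) by simp
    have "(\<integral>\<^sup>+x. f (x, y) \<partial>PA) = (\<integral>\<^sup>+x. (\<integral>\<^sup>+z. f (merge Ih Jh (x, z), y) \<partial>PiM Jh M1) \<partial>PiM Ih M1)"
      unfolding PA_def IJ(4)[symmetric] by (rule ps.product_nn_integral_fold[OF IJ(1-3) fxm])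
    also have "\<dots> \<le> (\<integral>\<^sup>+x. ennreal (\<beta>\<^sup>2 / real \<gamma>) \<partial>PiM Ih M1)"
    proof (rule nn_integral_mono)
      fix x
      have ctx: "ct i h (merge Ih Jh (x, z), y) = ct i h (x, y)" for z
        unfolding ct_def
      proof (rule traj_cong)
        fix h' j assume "h' < h" "j < \<gamma>"
        hence "(i, h', j) \<in> Ih" using i h by (auto simp: Ih_def Jh_def I1_def)
        thus "cxi i h' j (merge Ih Jh (x, z), y) = cxi i h' j (x, y)"
          by (simp add: cxi_def merge_def)
      next
        fix h' show "cb i h' (merge Ih Jh (x, z), y) = cb i h' (x, y)" by (simp add: cb_def)
      qed
      have cxz: "cxi i h j (merge Ih Jh (x, z), y) = cl i (z (i, h, j))" if "j < \<gamma>" for z j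
      proof -
        have "(i, h, j) \<in> Jh" "(i, h, j) \<notin> Ih" using that by (auto simp: Ih_def Jh_def)
        thus ?thesis by (simp add: cxi_def merge_def)
      qed
      have "(\<integral>\<^sup>+z. f (merge Ih Jh (x, z), y) \<partial>PiM Jh M1)
          = (\<integral>\<^sup>+z. ennreal ((norm ((1 / real \<gamma>) *\<^sub>R (\<Sum>j<\<gamma>. gl (ct i h (x, y)) (cl i (z (i, h, j)))) - gf i (ct i h (x, y))))\<^sup>2)
               \<partial>PiM ((\<lambda>j. (i, h, j)) ` {..<\<gamma>}) (\<lambda>_. measure_pmf (pmf_of_set (D i))))"
      proof -
        have pm: "PiM Jh M1 = PiM ((\<lambda>j. (i, h, j)) ` {..<\<gamma>}) (\<lambda>_. measure_pmf (pmf_of_set (D i)))"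
          unfolding Jh_def M1_def by (intro PiM_cong) auto
        show ?thesis unfolding pm f_def ctx
          by (intro nn_integral_cong) (simp add: cxz)
      qed
      also have "\<dots> \<le> ennreal (\<beta>\<^sup>2 / real \<gamma>)" by (rule K3_inner[OF i g])
      finally show "(\<integral>\<^sup>+z. f (merge Ih Jh (x, z), y) \<partial>PiM Jh M1) \<le> ennreal (\<beta>\<^sup>2 / real \<gamma>)" .
    qed
    also have "\<dots> = ennreal (\<beta>\<^sup>2 / real \<gamma>)"
    proof -
      interpret pI: prob_space "PiM Ih M1" by (intro prob_space_PiM prob_M1)
      show ?thesis by (simp add: pI.emeasure_space_1)
    qed
    finally show "(\<integral>\<^sup>+x. f (x, y) \<partial>PA) \<le> ennreal (\<beta>\<^sup>2 / real \<gamma>)" .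
  qed
  also have "\<dots> = ennreal (\<beta>\<^sup>2 / real \<gamma>)" by (simp add: b.emeasure_space_1)
  finally show ?thesis unfolding f_def .
qed

end

context canon2 begin

lemma emeasure_PC: "i < n \<Longrightarrow> emeasure PC {S. i \<in> S} = ennreal (real r / real n)"
proof -
  assume i: "i < n"
  have "emeasure PC {S. i \<in> S} = ennreal (real (card (Subs \<inter> {S. i \<in> S})) / real (card Subs))"
    unfolding PC_def using Subs_fin
    by (subst emeasure_pmf_of_set) (auto simp: ennreal_of_nat_eq_real_of_nat divide_ennreal card_gt_0_iff)
  also have "\<dots> = ennreal (real r / real n)"
    unfolding Subs_def using count_subs[OF i r] by simp
  finally show ?thesis .
qed

lemma K1:
  assumes Km: "K \<in> borel_measurable Sp" and Kind: "\<And>a b S S'. K (a, (b, S)) = K (a, (b, S'))"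
    and i: "i < n"
  shows "(\<integral>\<^sup>+w. indicator {S. i \<in> S} (snd (snd w)) * K w \<partial>P) = ennreal (real r / real n) * (\<integral>\<^sup>+w. K w \<partial>P)"
proof -
  let ?Q = "PB \<Otimes>\<^sub>M PC"
  interpret a: prob_space PA by (rule prob_PA)
  interpret b: prob_space ?Q by (rule prob_Q)
  interpret pb: prob_space PB by (rule PB)
  interpret pc: prob_space PC by (rule prob_PC)
  interpret pq: pair_prob_space PA ?Q ..
  interpret bc: pair_prob_space PB PC ..
  have Km': "K \<in> borel_measurable (PA \<Otimes>\<^sub>M ?Q)" using meas_P[OF Km] unfolding P_def .
  have indm: "(\<lambda>w. indicator {S. i \<in> S} (snd (snd w)) :: ennreal) \<in> borel_measurable (PA \<Otimes>\<^sub>M ?Q)"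
  proof -
    have "(\<lambda>w. snd (snd w)) \<in> measurable (PA \<Otimes>\<^sub>M ?Q) PC" by measurable
    moreover have "(indicator {S. i \<in> S} :: nat set \<Rightarrow> ennreal) \<in> borel_measurable PC"
      by (simp add: PC_def)
    ultimately show ?thesis by (rule measurable_compose)
  qed
  define H where "H y = (\<integral>\<^sup>+x. K (x, y) \<partial>PA)" for y
  have Hm: "H \<in> borel_measurable ?Q"
  proof -
    have "(\<lambda>(y, x). K (x, y)) \<in> borel_measurable (?Q \<Otimes>\<^sub>M PA)"
      using measurable_pair_swap[OF Km'] .
    thus ?thesis unfolding H_def by (rule a.borel_measurable_nn_integral)
  qed
  have HS: "H (b, S) = H (b, {})" for b S unfolding H_def by (subst Kind) (rule refl)
  have Hbm: "(\<lambda>b. H (b, {})) \<in> borel_measurable PB"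
    using measurable_compose[OF measurable_Pair2'[of "{}" PC PB] Hm] by (simp add: PC_def)
  have "(\<integral>\<^sup>+w. indicator {S. i \<in> S} (snd (snd w)) * K w \<partial>P)
      = (\<integral>\<^sup>+y. (\<integral>\<^sup>+x. indicator {S. i \<in> S} (snd y) * K (x, y) \<partial>PA) \<partial>?Q)"
  proof -
    have fm: "(\<lambda>w. indicator {S. i \<in> S} (snd (snd w)) * K w) \<in> borel_measurable (PA \<Otimes>\<^sub>M ?Q)"
      using indm Km' by (rule borel_measurable_times_ennreal)
    show ?thesis using pq.nn_integral_snd[OF fm] unfolding P_def by simp
  qed
  also have "\<dots> = (\<integral>\<^sup>+y. indicator {S. i \<in> S} (snd y) * H y \<partial>?Q)"
  proof (rule nn_integral_cong)
    fix y assume y: "y \<in> space ?Q"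
    show "(\<integral>\<^sup>+x. indicator {S. i \<in> S} (snd y) * K (x, y) \<partial>PA) = indicator {S. i \<in> S} (snd y) * H y"
      unfolding H_def
      by (rule nn_integral_cmult) (rule measurable_compose[OF measurable_Pair2'[OF y] Km'])
  qed
  also have "\<dots> = (\<integral>\<^sup>+b. (\<integral>\<^sup>+S. indicator {S. i \<in> S} S * H (b, S) \<partial>PC) \<partial>PB)"
    by (rule pc.nn_integral_fst[symmetric, where f="\<lambda>y. indicator {S. i \<in> S} (snd y) * H y", simplified])
       (rule borel_measurable_times_ennreal[OF measurable_compose[OF measurable_snd] Hm], simp add: PC_def)
  also have "\<dots> = (\<integral>\<^sup>+b. H (b, {}) * ennreal (real r / real n) \<partial>PB)"
  proof (rule nn_integral_cong)
    fix b
    have "(\<integral>\<^sup>+S. indicator {S. i \<in> S} S * H (b, S) \<partial>PC) = (\<integral>\<^sup>+S. H (b, {}) * indicator {S. i \<in> S} S \<partial>PC)"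
      by (intro nn_integral_cong) (subst HS, simp add: mult.commute)
    also have "\<dots> = H (b, {}) * emeasure PC {S. i \<in> S}"
      by (rule nn_integral_cmult_indicator) (simp add: PC_def)
    finally show "(\<integral>\<^sup>+S. indicator {S. i \<in> S} S * H (b, S) \<partial>PC) = H (b, {}) * ennreal (real r / real n)"
      using emeasure_PC[OF i] by simp
  qed
  also have "\<dots> = (\<integral>\<^sup>+b. H (b, {}) \<partial>PB) * ennreal (real r / real n)"
    by (rule nn_integral_multc[OF Hbm])
  also have "(\<integral>\<^sup>+b. H (b, {}) \<partial>PB) = (\<integral>\<^sup>+b. (\<integral>\<^sup>+S. H (b, S) \<partial>PC) \<partial>PB)"
  proof (rule nn_integral_cong)
    fix b
    have "(\<integral>\<^sup>+S. H (b, S) \<partial>PC) = (\<integral>\<^sup>+S. H (b, {}) \<partial>PC)" by (rule nn_integral_cong) (rule HS)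
    thus "H (b, {}) = (\<integral>\<^sup>+S. H (b, S) \<partial>PC)" by (simp add: pc.emeasure_space_1)
  qed
  also have "\<dots> = (\<integral>\<^sup>+y. H y \<partial>?Q)"
    by (rule pc.nn_integral_fst) (rule Hm)
  also have "\<dots> = (\<integral>\<^sup>+w. K w \<partial>P)"
    unfolding H_def P_def by (rule pq.nn_integral_snd[OF Km'])
  finally show ?thesis by (simp add: mult.commute)
qed

end

lemma Basis_vec_range: "(Basis :: (real^'d) set) = range (\<lambda>j. axis j 1)"
  by (auto simp: Basis_vec_def)

lemma inj_axis1: "inj (\<lambda>j::'d::finite. axis j (1::real))"
  by (auto simp: inj_def axis_eq_axis)

lemma nn_normal_1: "0 < \<sigma> \<Longrightarrow> (\<integral>\<^sup>+t. ennreal (normal_density 0 \<sigma> t) \<partial>lborel) = 1"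
  by (subst nn_integral_eq_integral) auto

lemma nn_normal_2: "0 < \<sigma> \<Longrightarrow> (\<integral>\<^sup>+t. ennreal (normal_density 0 \<sigma> t * t\<^sup>2) \<partial>lborel) = ennreal (\<sigma>\<^sup>2)"
proof -
  assume s: "0 < \<sigma>"
  have hb: "has_bochner_integral lborel (\<lambda>x. normal_density 0 \<sigma> x * (x - 0) ^ (2 * 1)) (fact (2 * 1) / ((2 / \<sigma>\<^sup>2)^1 * fact 1))"
    using normal_moment_even[OF s, of 0 1] .
  have hb': "has_bochner_integral lborel (\<lambda>x. normal_density 0 \<sigma> x * x\<^sup>2) (\<sigma>\<^sup>2)"
    using hb s by (simp add: power2_eq_square fact_numeral)
  show ?thesis
    using hb' by (subst nn_integral_eq_integral)
      (auto simp: has_bochner_integral_iff)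
qed

lemma gauss_sq:
  fixes \<sigma> :: real
  assumes s: "0 < \<sigma>"
  shows "(\<integral>\<^sup>+x. gauss_density \<sigma> (x :: real^'d) * ennreal ((norm x)\<^sup>2) \<partial>lborel) = ennreal (real CARD('d) * \<sigma>\<^sup>2)"
proof -
  let ?e = "\<lambda>j::'d. axis j (1::real)"
  define f where "f k b t = ennreal (normal_density 0 \<sigma> t * (if b = ?e k then t\<^sup>2 else 1))" for k and b :: "real^'d" and t
  have pt: "gauss_density \<sigma> x * ennreal ((norm x)\<^sup>2) = (\<Sum>k\<in>UNIV. \<Prod>b\<in>Basis. f k b (x \<bullet> b))" for x :: "real^'d"
  proof -
    have n2: "(norm x)\<^sup>2 = (\<Sum>k\<in>UNIV. (x $ k)\<^sup>2)"
      unfolding power2_norm_eq_inner inner_vec_def by (simp add: power2_eq_square)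
    have "(\<Prod>b\<in>Basis. f k b (x \<bullet> b)) = (\<Prod>j\<in>UNIV. f k (?e j) (x $ j))" for k
      unfolding Basis_vec_range by (subst prod.reindex[OF inj_axis1]) (simp add: inner_axis)
    also have "\<dots> k = ennreal (\<Prod>j\<in>UNIV. normal_density 0 \<sigma> (x $ j) * (if j = k then (x $ j)\<^sup>2 else 1))" for k
      unfolding f_def by (subst prod_ennreal[symmetric]) (auto simp: axis_eq_axis intro!: prod.cong)
    also have "\<dots> k = ennreal ((\<Prod>j\<in>UNIV. normal_density 0 \<sigma> (x $ j)) * (x $ k)\<^sup>2)" for k
      by (simp add: prod.distrib prod.delta)
    finally have "(\<Sum>k\<in>UNIV. \<Prod>b\<in>Basis. f k b (x \<bullet> b)) = (\<Sum>k\<in>UNIV. ennreal ((\<Prod>j\<in>UNIV. normal_density 0 \<sigma> (x $ j)) * (x $ k)\<^sup>2))"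
      by simp
    also have "\<dots> = ennreal (\<Sum>k\<in>UNIV. (\<Prod>j\<in>UNIV. normal_density 0 \<sigma> (x $ j)) * (x $ k)\<^sup>2)"
      by (rule sum_ennreal) (auto intro!: mult_nonneg_nonneg prod_nonneg)
    also have "\<dots> = gauss_density \<sigma> x * ennreal ((norm x)\<^sup>2)"
      unfolding gauss_density_def n2 sum_distrib_left[symmetric] by (rule ennreal_mult) (auto intro!: prod_nonneg sum_nonneg)
    finally show ?thesis ..
  qed
  have fm: "f k b \<in> borel_measurable borel" for k b unfolding f_def by measurable
  have "(\<integral>\<^sup>+x. gauss_density \<sigma> (x :: real^'d) * ennreal ((norm x)\<^sup>2) \<partial>lborel)
      = (\<Sum>k\<in>UNIV. \<integral>\<^sup>+x. (\<Prod>b\<in>Basis. f k b (x \<bullet> b)) \<partial>lborel)"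
    unfolding pt by (rule nn_integral_sum) (use fm in measurable)
  also have "\<dots> = (\<Sum>k\<in>UNIV. \<Prod>b\<in>Basis. (\<integral>\<^sup>+t. f k b t \<partial>lborel))"
    by (intro sum.cong refl nn_integral_lborel_prod fm) auto
  also have "\<dots> = (\<Sum>k\<in>(UNIV::'d set). \<Prod>b\<in>Basis. (if b = ?e k then ennreal (\<sigma>\<^sup>2) else 1))"
    by (intro sum.cong prod.cong refl) (auto simp: f_def nn_normal_1[OF s] nn_normal_2[OF s])
  also have "\<dots> = (\<Sum>k\<in>(UNIV::'d set). ennreal (\<sigma>\<^sup>2))"
    by (intro sum.cong refl) (simp add: prod.delta Basis_vec_range)
  also have "\<dots> = ennreal (real CARD('d) * \<sigma>\<^sup>2)"
    by (simp add: ennreal_of_nat_eq_real_of_nat ennreal_mult)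
  finally show ?thesis .
qed


context canon2 begin

definition "Fc i h w = gf i (ct i h w)"
definition "Nc i h w = (1 / real \<gamma>) *\<^sub>R (\<Sum>j<\<gamma>. gl (ct i h w) (cxi i h j w)) - Fc i h w"
definition "Kc s c1 c2 i w = (\<Sum>h<s. ennreal (c1 * (norm (Fc i h w))\<^sup>2) + ennreal (c1 * (norm (Nc i h w))\<^sup>2)
                                 + ennreal (c2 * (norm (cb i h w))\<^sup>2))"

lemma Fc_meas: "i < n \<Longrightarrow> h < \<tau> \<Longrightarrow> Fc i h \<in> borel_measurable Sp"
  unfolding Fc_def by (rule measurable_compose[OF ct_meas gf_meas]) auto

lemma Nc_meas: "i < n \<Longrightarrow> h < \<tau> \<Longrightarrow> Nc i h \<in> borel_measurable Sp"
proof -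
  assume i: "i < n" and h: "h < \<tau>"
  have ctm: "ct i h \<in> borel_measurable Sp" using i h by (intro ct_meas) auto
  show ?thesis unfolding Nc_def
  proof (intro borel_measurable_diff borel_measurable_scaleR borel_measurable_const borel_measurable_sum Fc_meas i h)
    show "(\<lambda>w. gl (ct i h w) (cxi i h j w)) \<in> borel_measurable Sp" if "j \<in> {..<\<gamma>}" for j
      using that i h by (intro gl_cxi_meas ctm) (auto simp: I1_def)
  qed
qed

lemma cbm: "i < n \<Longrightarrow> h < \<tau> \<Longrightarrow> cb i h \<in> borel_measurable Sp"
  by (intro cb_meas) (auto simp: I2_def)

lemma Kc_meas: "i < n \<Longrightarrow> s \<le> \<tau> \<Longrightarrow> Kc s c1 c2 i \<in> borel_measurable Sp"
proof -
  assume i: "i < n" and s: "s \<le> \<tau>"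
  have [measurable]: "Fc i h \<in> borel_measurable Sp" "Nc i h \<in> borel_measurable Sp" "cb i h \<in> borel_measurable Sp"
    if "h \<in> {..<s}" for h using that i s by (auto intro!: Fc_meas Nc_meas cbm)
  show ?thesis unfolding Kc_def
    by (intro borel_measurable_sum) measurable
qed

lemma ct_S: "ct i h (a, (b, S)) = ct i h (a, (b, S'))"
  unfolding ct_def by (rule traj_cong) (auto simp: cxi_def cb_def)

lemma Kc_S: "Kc s c1 c2 i (a, (b, S)) = Kc s c1 c2 i (a, (b, S'))"
  unfolding Kc_def Fc_def Nc_def by (simp add: ct_S[of i _ a b S S'] cxi_def cb_def)

lemma Kc_int:
  assumes i: "i < n" and s: "s \<le> \<tau>" and c: "0 \<le> c1" "0 \<le> c2"
  shows "(\<integral>\<^sup>+w. Kc s c1 c2 i w \<partial>P)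
      \<le> (\<Sum>h<s. ennreal c1 * (\<integral>\<^sup>+w. ennreal ((norm (Fc i h w))\<^sup>2) \<partial>P) + ennreal (c1 * (\<beta>\<^sup>2 / real \<gamma>))
              + ennreal c2 * (\<integral>\<^sup>+w. ennreal ((norm (cb i h w))\<^sup>2) \<partial>P))"
proof -
  have hm[measurable]: "Fc i h \<in> borel_measurable P" "Nc i h \<in> borel_measurable P" "cb i h \<in> borel_measurable P"
    if "h \<in> {..<s}" for h using that i s by (auto intro!: Fc_meas Nc_meas cbm meas_P)
  have "(\<integral>\<^sup>+w. Kc s c1 c2 i w \<partial>P) = (\<Sum>h<s. (\<integral>\<^sup>+w. ennreal (c1 * (norm (Fc i h w))\<^sup>2) + ennreal (c1 * (norm (Nc i h w))\<^sup>2)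
                                 + ennreal (c2 * (norm (cb i h w))\<^sup>2) \<partial>P))"
    unfolding Kc_def by (rule nn_integral_sum) (use hm in measurable)
  also have "\<dots> = (\<Sum>h<s. (\<integral>\<^sup>+w. ennreal c1 * ennreal ((norm (Fc i h w))\<^sup>2) \<partial>P) + (\<integral>\<^sup>+w. ennreal c1 * ennreal ((norm (Nc i h w))\<^sup>2) \<partial>P)
                                 + (\<integral>\<^sup>+w. ennreal c2 * ennreal ((norm (cb i h w))\<^sup>2) \<partial>P))"
  proof (rule sum.cong[OF refl], goal_cases)
    case (1 h)
    note [measurable] = hm[OF 1]
    show ?case using c by (simp add: nn_integral_add ennreal_mult)
  qed
  also have "\<dots> = (\<Sum>h<s. ennreal c1 * (\<integral>\<^sup>+w. ennreal ((norm (Fc i h w))\<^sup>2) \<partial>P) + ennreal c1 * (\<integral>\<^sup>+w. ennreal ((norm (Nc i h w))\<^sup>2) \<partial>P)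
                                 + ennreal c2 * (\<integral>\<^sup>+w. ennreal ((norm (cb i h w))\<^sup>2) \<partial>P))"
  proof (rule sum.cong[OF refl], goal_cases)
    case (1 h)
    note [measurable] = hm[OF 1]
    show ?case by (simp add: nn_integral_cmult)
  qed
  also have "\<dots> \<le> (\<Sum>h<s. ennreal c1 * (\<integral>\<^sup>+w. ennreal ((norm (Fc i h w))\<^sup>2) \<partial>P) + ennreal (c1 * (\<beta>\<^sup>2 / real \<gamma>))
              + ennreal c2 * (\<integral>\<^sup>+w. ennreal ((norm (cb i h w))\<^sup>2) \<partial>P))"
  proof (rule sum_mono, goal_cases)
    case (1 h)
    hence h: "h \<in> {..<s}" .
    have "(\<integral>\<^sup>+w. ennreal ((norm (Nc i h w))\<^sup>2) \<partial>P) \<le> ennreal (\<beta>\<^sup>2 / real \<gamma>)"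
      using K3[OF i, of h] h s unfolding Nc_def Fc_def by simp
    hence "ennreal c1 * (\<integral>\<^sup>+w. ennreal ((norm (Nc i h w))\<^sup>2) \<partial>P) \<le> ennreal c1 * ennreal (\<beta>\<^sup>2 / real \<gamma>)"
      by (rule mult_left_mono) simp
    also have "\<dots> = ennreal (c1 * (\<beta>\<^sup>2 / real \<gamma>))"
      using c by (intro ennreal_mult[symmetric]) auto
    finally have "ennreal c1 * (\<integral>\<^sup>+w. ennreal ((norm (Nc i h w))\<^sup>2) \<partial>P) \<le> ennreal (c1 * (\<beta>\<^sup>2 / real \<gamma>))" .
    thus ?case by (intro add_mono order_refl)
  qed
  finally show ?thesis .
qed

lemma pointwise:
  assumes S: "snd (snd w) \<in> Subs" and s: "s \<le> \<tau>"
  shows "(1 / real r) * (\<Sum>i\<in>snd (snd w). (norm ((1 / real r) *\<^sub>R (\<Sum>i'\<in>snd (snd w). ct i' s w) - ct i s w))\<^sup>2)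
     \<le> (\<Sum>i\<in>snd (snd w). \<Sum>h<s. (4 * real s * \<eta>\<^sup>2 / real r) * (norm (Fc i h w))\<^sup>2
            + (4 * real s * \<eta>\<^sup>2 / real r) * (norm (Nc i h w))\<^sup>2 + (2 * real s * \<eta>\<^sup>2 / real r) * (norm (cb i h w))\<^sup>2)"
proof -
  let ?S = "snd (snd w)"
  have fS: "finite ?S" "card ?S = r" using S by (auto simp: Subs_def intro: finite_subset)
  define X where "X i = (\<Sum>h<s. Fc i h w)" for i
  define Y where "Y i = (\<Sum>h<s. Nc i h w)" for i
  define Z where "Z i = (\<Sum>h<s. cb i h w)" for i
  have th: "ct i s w = \<theta>0 - \<eta> *\<^sub>R (X i + Y i + Z i)" for i
  proof -
    have "ct i s w = \<theta>0 - \<eta> *\<^sub>R (\<Sum>h<s. (1 / real \<gamma>) *\<^sub>R (\<Sum>j<\<gamma>. gl (ct i h w) (cxi i h j w)) + cb i h w)"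
      unfolding ct_def by (rule traj_sum)
    also have "(\<Sum>h<s. (1 / real \<gamma>) *\<^sub>R (\<Sum>j<\<gamma>. gl (ct i h w) (cxi i h j w)) + cb i h w) = (\<Sum>h<s. Fc i h w + Nc i h w + cb i h w)"
      by (intro sum.cong refl) (simp add: Nc_def)
    also have "\<dots> = X i + Y i + Z i" by (simp add: X_def Y_def Z_def sum.distrib)
    finally show ?thesis .
  qed
  have "(1 / real r) * (\<Sum>i\<in>?S. (norm ((1 / real r) *\<^sub>R (\<Sum>i'\<in>?S. ct i' s w) - ct i s w))\<^sup>2)
     \<le> (\<Sum>i\<in>?S. (\<eta>\<^sup>2 / real r) * (4 * (norm (X i))\<^sup>2 + 4 * (norm (Y i))\<^sup>2 + 2 * (norm (Z i))\<^sup>2))"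
    by (rule pw_bound[OF fS r(1) th])
  also have "\<dots> \<le> (\<Sum>i\<in>?S. (\<eta>\<^sup>2 / real r) * (4 * (real s * (\<Sum>h<s. (norm (Fc i h w))\<^sup>2))
        + 4 * (real s * (\<Sum>h<s. (norm (Nc i h w))\<^sup>2)) + 2 * (real s * (\<Sum>h<s. (norm (cb i h w))\<^sup>2))))"
  proof (rule sum_mono)
    fix i
    have a: "4 * (norm (X i))\<^sup>2 \<le> 4 * (real s * (\<Sum>h<s. (norm (Fc i h w))\<^sup>2))"
      unfolding X_def using norm_sum_sq by simp
    have b: "4 * (norm (Y i))\<^sup>2 \<le> 4 * (real s * (\<Sum>h<s. (norm (Nc i h w))\<^sup>2))"
      unfolding Y_def using norm_sum_sq by simp
    have d: "2 * (norm (Z i))\<^sup>2 \<le> 2 * (real s * (\<Sum>h<s. (norm (cb i h w))\<^sup>2))"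
      unfolding Z_def using norm_sum_sq by simp
    show "(\<eta>\<^sup>2 / real r) * (4 * (norm (X i))\<^sup>2 + 4 * (norm (Y i))\<^sup>2 + 2 * (norm (Z i))\<^sup>2)
      \<le> (\<eta>\<^sup>2 / real r) * (4 * (real s * (\<Sum>h<s. (norm (Fc i h w))\<^sup>2))
        + 4 * (real s * (\<Sum>h<s. (norm (Nc i h w))\<^sup>2)) + 2 * (real s * (\<Sum>h<s. (norm (cb i h w))\<^sup>2)))"
      by (intro mult_left_mono add_mono a b d) auto
  qed
  also have "\<dots> = (\<Sum>i\<in>?S. \<Sum>h<s. (4 * real s * \<eta>\<^sup>2 / real r) * (norm (Fc i h w))\<^sup>2
            + (4 * real s * \<eta>\<^sup>2 / real r) * (norm (Nc i h w))\<^sup>2 + (2 * real s * \<eta>\<^sup>2 / real r) * (norm (cb i h w))\<^sup>2)"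
    by (intro sum.cong refl) (simp add: sum.distrib sum_distrib_left algebra_simps)
  finally show ?thesis .
qed

end

lemma final_alg:
  fixes EF :: "nat \<Rightarrow> nat \<Rightarrow> ennreal" and d \<sigma> \<beta> \<eta> :: real and n r s \<gamma> :: nat
  assumes r: "0 < r" "r \<le> n" and g: "0 < \<gamma>" and d: "0 \<le> d"
  shows "(\<Sum>i<n. ennreal (real r / real n) * (\<Sum>h<s. ennreal (4 * real s * \<eta>\<^sup>2 / real r) * EF i h
            + ennreal (4 * real s * \<eta>\<^sup>2 / real r * (\<beta>\<^sup>2 / real \<gamma>))
            + ennreal (2 * real s * \<eta>\<^sup>2 / real r) * ennreal (d * \<sigma>\<^sup>2)))
     \<le> ennreal (2 * (real s)\<^sup>2 * \<eta>\<^sup>2 * (d * \<sigma>\<^sup>2 * (real r + 1) / real r + 2 * \<beta>\<^sup>2 / real \<gamma>))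
       + ennreal (4 * real s * \<eta>\<^sup>2 * (2 * (real n - real r)\<^sup>2 + (real n)\<^sup>2) / (real n) ^ 3)
         * (\<Sum>h<s. \<Sum>i<n. EF i h)"
proof -
  define c1 where "c1 = 4 * real s * \<eta>\<^sup>2 / real r"
  define A where "A = 4 * real s * \<eta>\<^sup>2 / real r * (\<beta>\<^sup>2 / real \<gamma>) + 2 * real s * \<eta>\<^sup>2 / real r * (d * \<sigma>\<^sup>2)"
  have n0: "0 < n" using r by simp
  have c10: "0 \<le> c1" unfolding c1_def by simp
  have A0: "0 \<le> A" unfolding A_def using d by simp
  have q0: "0 \<le> real r / real n" by simp
  have step: "ennreal (real r / real n) * (ennreal (4 * real s * \<eta>\<^sup>2 / real r) * EF i h
            + ennreal (4 * real s * \<eta>\<^sup>2 / real r * (\<beta>\<^sup>2 / real \<gamma>))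
            + ennreal (2 * real s * \<eta>\<^sup>2 / real r) * ennreal (d * \<sigma>\<^sup>2))
      = ennreal (real r / real n * c1) * EF i h + ennreal (real r / real n * A)" for i h
  proof -
    have "ennreal (4 * real s * \<eta>\<^sup>2 / real r * (\<beta>\<^sup>2 / real \<gamma>)) + ennreal (2 * real s * \<eta>\<^sup>2 / real r) * ennreal (d * \<sigma>\<^sup>2)
        = ennreal A"
      unfolding A_def using d by (simp add: ennreal_mult[symmetric] ennreal_plus[symmetric] del: ennreal_plus)
    hence "ennreal (real r / real n) * (ennreal (4 * real s * \<eta>\<^sup>2 / real r) * EF i h
            + ennreal (4 * real s * \<eta>\<^sup>2 / real r * (\<beta>\<^sup>2 / real \<gamma>))
            + ennreal (2 * real s * \<eta>\<^sup>2 / real r) * ennreal (d * \<sigma>\<^sup>2))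
        = ennreal (real r / real n) * (ennreal c1 * EF i h + ennreal A)"
      unfolding c1_def by (simp add: add.assoc)
    also have "\<dots> = ennreal (real r / real n * c1) * EF i h + ennreal (real r / real n * A)"
    proof -
      have m1: "ennreal (real r / real n * c1) = ennreal (real r / real n) * ennreal c1"
        using c10 by (intro ennreal_mult) auto
      have m2: "ennreal (real r / real n * A) = ennreal (real r / real n) * ennreal A"
        using A0 by (intro ennreal_mult) auto
      show ?thesis by (simp only: m1 m2 distrib_left mult.assoc)
    qed
    finally show ?thesis .
  qed
  have "(\<Sum>i<n. ennreal (real r / real n) * (\<Sum>h<s. ennreal (4 * real s * \<eta>\<^sup>2 / real r) * EF i h
            + ennreal (4 * real s * \<eta>\<^sup>2 / real r * (\<beta>\<^sup>2 / real \<gamma>))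
            + ennreal (2 * real s * \<eta>\<^sup>2 / real r) * ennreal (d * \<sigma>\<^sup>2)))
      = (\<Sum>i<n. \<Sum>h<s. ennreal (real r / real n * c1) * EF i h + ennreal (real r / real n * A))"
    by (simp only: sum_distrib_left step)
  also have "\<dots> = ennreal (real r / real n * c1) * (\<Sum>h<s. \<Sum>i<n. EF i h) + ennreal (real n * real s * (real r / real n * A))"
  proof -
    have "(\<Sum>i<n. \<Sum>h<s. ennreal (real r / real n * c1) * EF i h + ennreal (real r / real n * A))
        = ennreal (real r / real n * c1) * (\<Sum>i<n. \<Sum>h<s. EF i h) + of_nat n * (of_nat s * ennreal (real r / real n * A))"
      by (simp add: sum.distrib sum_distrib_left)
    also have "(\<Sum>i<n. \<Sum>h<s. EF i h) = (\<Sum>h<s. \<Sum>i<n. EF i h)" by (rule sum.swap)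
    also have "(of_nat n * (of_nat s * ennreal (real r / real n * A)) :: ennreal) = ennreal (real n * real s * (real r / real n * A))"
    proof -
      have x0: "0 \<le> real r / real n * A" using A0 by simp
      have e1: "ennreal (real s * (real r / real n * A)) = ennreal (real s) * ennreal (real r / real n * A)"
        by (rule ennreal_mult) (use x0 in auto)
      have x1: "0 \<le> real s * (real r / real n * A)" by (rule mult_nonneg_nonneg) (use x0 in auto)
      have e2: "ennreal (real n * (real s * (real r / real n * A))) = ennreal (real n) * ennreal (real s * (real r / real n * A))"
        by (rule ennreal_mult) (use x1 in auto)
      show ?thesis by (simp only: ennreal_of_nat_eq_real_of_nat e1 e2 mult.assoc)
    qed
    finally show ?thesis .
  qed
  also have "\<dots> \<le> ennreal (4 * real s * \<eta>\<^sup>2 * (2 * (real n - real r)\<^sup>2 + (real n)\<^sup>2) / (real n) ^ 3) * (\<Sum>h<s. \<Sum>i<n. EF i h)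
        + ennreal (2 * (real s)\<^sup>2 * \<eta>\<^sup>2 * (d * \<sigma>\<^sup>2 * (real r + 1) / real r + 2 * \<beta>\<^sup>2 / real \<gamma>))"
  proof (intro add_mono mult_right_mono ennreal_leI)
    have "real r / real n * c1 = 4 * real s * \<eta>\<^sup>2 * (1 / real n)" unfolding c1_def using r by (simp add: field_simps)
    also have "\<dots> \<le> 4 * real s * \<eta>\<^sup>2 * ((2 * (real n - real r)\<^sup>2 + (real n)\<^sup>2) / (real n) ^ 3)"
    proof (rule mult_left_mono)
      have "1 / real n = (real n)\<^sup>2 / (real n) ^ 3" using n0 by (simp add: power2_eq_square power3_eq_cube)
      also have "\<dots> \<le> (2 * (real n - real r)\<^sup>2 + (real n)\<^sup>2) / (real n) ^ 3"
        by (rule divide_right_mono) auto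
      finally show "1 / real n \<le> (2 * (real n - real r)\<^sup>2 + (real n)\<^sup>2) / (real n) ^ 3" .
    qed simp
    finally show "real r / real n * c1 \<le> 4 * real s * \<eta>\<^sup>2 * (2 * (real n - real r)\<^sup>2 + (real n)\<^sup>2) / (real n) ^ 3"
      by simp
    have "real n * real s * (real r / real n * A) = 4 * (real s)\<^sup>2 * \<eta>\<^sup>2 * \<beta>\<^sup>2 / real \<gamma> + 2 * (real s)\<^sup>2 * \<eta>\<^sup>2 * (d * \<sigma>\<^sup>2)"
      unfolding A_def using r n0 by (simp add: field_simps power2_eq_square)
    also have "\<dots> \<le> 2 * (real s)\<^sup>2 * \<eta>\<^sup>2 * (d * \<sigma>\<^sup>2 * (real r + 1) / real r + 2 * \<beta>\<^sup>2 / real \<gamma>)"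
    proof -
      have "d * \<sigma>\<^sup>2 \<le> d * \<sigma>\<^sup>2 * (real r + 1) / real r" using r d by (simp add: field_simps)
      hence "2 * (real s)\<^sup>2 * \<eta>\<^sup>2 * (d * \<sigma>\<^sup>2) \<le> 2 * (real s)\<^sup>2 * \<eta>\<^sup>2 * (d * \<sigma>\<^sup>2 * (real r + 1) / real r)"
        by (rule mult_left_mono) simp
      thus ?thesis by (simp add: algebra_simps)
    qed
    finally show "real n * real s * (real r / real n * A) \<le> 2 * (real s)\<^sup>2 * \<eta>\<^sup>2 * (d * \<sigma>\<^sup>2 * (real r + 1) / real r + 2 * \<beta>\<^sup>2 / real \<gamma>)" .
  qed auto
  finally show ?thesis by (simp add: add.commute)
qed


lemma ennreal_sum3:
  assumes "\<And>i h. 0 \<le> a i h" "\<And>i h. 0 \<le> b i h" "\<And>i h. 0 \<le> c i h"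
  shows "ennreal (\<Sum>i\<in>S. \<Sum>h<s. a i h + b i h + c i h)
       = (\<Sum>i\<in>S. \<Sum>h<s. ennreal (a i h) + ennreal (b i h) + ennreal (c i h))"
proof -
  have "ennreal (\<Sum>i\<in>S. \<Sum>h<s. a i h + b i h + c i h) = (\<Sum>i\<in>S. ennreal (\<Sum>h<s. a i h + b i h + c i h))"
    by (rule sum_ennreal[symmetric]) (auto intro!: sum_nonneg add_nonneg_nonneg assms)
  also have "\<dots> = (\<Sum>i\<in>S. \<Sum>h<s. ennreal (a i h + b i h + c i h))"
    by (intro sum.cong refl sum_ennreal[symmetric]) (auto intro!: add_nonneg_nonneg assms)
  also have "\<dots> = (\<Sum>i\<in>S. \<Sum>h<s. ennreal (a i h) + ennreal (b i h) + ennreal (c i h))"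
    by (intro sum.cong refl) (simp add: ennreal_plus assms add_nonneg_nonneg)
  finally show ?thesis .
qed

lemma sum_indicator_subset:
  fixes K :: "nat \<Rightarrow> ennreal"
  assumes "S \<subseteq> {..<n}"
  shows "(\<Sum>i<n. indicator {S. i \<in> S} S * K i) = (\<Sum>i\<in>S. K i)"
proof -
  have "(\<Sum>i<n. indicator {S. i \<in> S} S * K i) = (\<Sum>i\<in>{..<n}. if i \<in> S then K i else 0)"
    by (intro sum.cong) (auto simp: indicator_def)
  also have "\<dots> = (\<Sum>i\<in>{..<n} \<inter> S. K i)" by (rule sum.inter_restrict[symmetric]) simp
  also have "{..<n} \<inter> S = S" using assms by auto
  finally show ?thesis .
qed


theorem lemma8:
  fixes M :: "'a measure"
    and n r \<tau> \<gamma> s :: nat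
    and \<eta> \<sigma> \<beta> :: real
    and \<theta>0 :: "real^'d"
    and D :: "nat \<Rightarrow> 'x set"
    and l :: "real^'d \<Rightarrow> 'x \<Rightarrow> real"
    and gl :: "real^'d \<Rightarrow> 'x \<Rightarrow> real^'d"
    and gf :: "nat \<Rightarrow> real^'d \<Rightarrow> real^'d"
    and \<xi> :: "nat \<Rightarrow> nat \<Rightarrow> nat \<Rightarrow> 'a \<Rightarrow> 'x"
    and b :: "nat \<Rightarrow> nat \<Rightarrow> 'a \<Rightarrow> real^'d"
    and \<Omega> :: "'a \<Rightarrow> nat set"
  assumes P: "prob_space M"
    and r_pos: "0 < r" and r_le: "r \<le> n"
    and gamma_pos: "0 < \<gamma>"
    and s_lt: "s < \<tau>"
    and sigma_pos: "0 < \<sigma>"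
    and D_fin: "\<And>i. i < n \<Longrightarrow> finite (D i) \<and> D i \<noteq> {}"
    and grad_l: "\<And>i \<theta> x. i < n \<Longrightarrow> x \<in> D i \<Longrightarrow>
                   ((\<lambda>v. l v x) has_derivative (\<lambda>v. gl \<theta> x \<bullet> v)) (at \<theta>)"
    and grad_f: "\<And>i \<theta>. i < n \<Longrightarrow>
                   (local_obj D l i has_derivative (\<lambda>v. gf i \<theta> \<bullet> v)) (at \<theta>)"
    and unbiased: "\<And>i x. i < n \<Longrightarrow>
                   measure_pmf.expectation (pmf_of_set (D i)) (\<lambda>z. gl x z) = gf i x"
    and bounded_var: "\<And>i x. i < n \<Longrightarrow>
                   measure_pmf.expectation (pmf_of_set (D i)) (\<lambda>z. (norm (gl x z - gf i x))\<^sup>2) \<le> \<beta>\<^sup>2"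
    and xi_distr: "\<And>i h j. i < n \<Longrightarrow> h < \<tau> \<Longrightarrow> j < \<gamma> \<Longrightarrow>
                   distr M (count_space UNIV) (\<xi> i h j) = measure_pmf (pmf_of_set (D i))"
    and b_distr: "\<And>i h. i < n \<Longrightarrow> h < \<tau> \<Longrightarrow>
                   distributed M lborel (b i h) (gauss_density \<sigma>)"
    and Omega_distr: "distr M (count_space UNIV) \<Omega>
                   = measure_pmf (pmf_of_set {S. S \<subseteq> {..<n} \<and> card S = r})"
    and indep_xi: "prob_space.indep_vars M (\<lambda>_. count_space UNIV) (\<lambda>(i, h, j). \<xi> i h j)
                   {(i, h, j). i < n \<and> h < \<tau> \<and> j < \<gamma>}"
    and indep_b: "prob_space.indep_vars M (\<lambda>_. borel) (\<lambda>(i, h). b i h)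
                   {(i, h). i < n \<and> h < \<tau>}"
    and indep_groups: "distr M
                   (PiM {(i, h, j). i < n \<and> h < \<tau> \<and> j < \<gamma>} (\<lambda>_. count_space UNIV)
                    \<Otimes>\<^sub>M (PiM {(i, h). i < n \<and> h < \<tau>} (\<lambda>_. borel) \<Otimes>\<^sub>M count_space UNIV))
                   (\<lambda>\<omega>. (restrict (\<lambda>(i, h, j). \<xi> i h j \<omega>) {(i, h, j). i < n \<and> h < \<tau> \<and> j < \<gamma>},
                         restrict (\<lambda>(i, h). b i h \<omega>) {(i, h). i < n \<and> h < \<tau>}, \<Omega> \<omega>))
                 = distr M (PiM {(i, h, j). i < n \<and> h < \<tau> \<and> j < \<gamma>} (\<lambda>_. count_space UNIV))
                     (\<lambda>\<omega>. restrict (\<lambda>(i, h, j). \<xi> i h j \<omega>) {(i, h, j). i < n \<and> h < \<tau> \<and> j < \<gamma>})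
                   \<Otimes>\<^sub>M (distr M (PiM {(i, h). i < n \<and> h < \<tau>} (\<lambda>_. borel))
                     (\<lambda>\<omega>. restrict (\<lambda>(i, h). b i h \<omega>) {(i, h). i < n \<and> h < \<tau>})
                   \<Otimes>\<^sub>M distr M (count_space UNIV) \<Omega>)"
  shows
    "(\<integral>\<^sup>+\<omega>. ennreal ((1 / real r) *
         (\<Sum>i\<in>\<Omega> \<omega>. (norm ((1 / real r) *\<^sub>R (\<Sum>i'\<in>\<Omega> \<omega>. traj \<eta> \<gamma> gl \<theta>0 \<xi> b i' s \<omega>)
                               - traj \<eta> \<gamma> gl \<theta>0 \<xi> b i s \<omega>))\<^sup>2)) \<partial>M)
     \<le> ennreal (2 * (real s)\<^sup>2 * \<eta>\<^sup>2 *
           (real CARD('d) * \<sigma>\<^sup>2 * (real r + 1) / real r + 2 * \<beta>\<^sup>2 / real \<gamma>))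
       + ennreal (4 * real s * \<eta>\<^sup>2 *
           (2 * (real n - real r)\<^sup>2 + (real n)\<^sup>2) / (real n) ^ 3)
         * (\<Sum>h<s. \<Sum>i<n. \<integral>\<^sup>+\<omega>. ennreal ((norm (gf i (traj \<eta> \<gamma> gl \<theta>0 \<xi> b i h \<omega>)))\<^sup>2) \<partial>M)"
proof -
  interpret Mp: prob_space M by (rule P)
  define I1 where "I1 = {(i, h, j). i < n \<and> h < \<tau> \<and> j < \<gamma>}"
  define I2 where "I2 = {(i, h). i < n \<and> h < \<tau>}"
  have n0: "0 < n" using r_pos r_le by simp
  have xim: "\<xi> i h j \<in> measurable M (count_space UNIV)" if "i < n" "h < \<tau>" "j < \<gamma>" for i h j
  proof -
    have "(i, h, j) \<in> {(i, h, j). i < n \<and> h < \<tau> \<and> j < \<gamma>}" using that by simp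
    with indep_xi show ?thesis unfolding Mp.indep_vars_def by fastforce
  qed
  have bm: "b i h \<in> borel_measurable M" if "i < n" "h < \<tau>" for i h
  proof -
    have "(i, h) \<in> {(i, h). i < n \<and> h < \<tau>}" using that by simp
    with indep_b show ?thesis unfolding Mp.indep_vars_def by fastforce
  qed
  have Om: "\<Omega> \<in> measurable M (count_space UNIV)"
    by (rule distr_measurable[OF P Omega_distr prob_space_measure_pmf]) simp
  have glm: "(\<lambda>\<theta>. gl \<theta> z) \<in> borel_measurable borel" if "i < n" "z \<in> D i" for i z
    by (rule deriv_meas[where f="\<lambda>v. l v z"]) (rule grad_l[OF that])
  have Xim: "(\<lambda>\<omega>. restrict (\<lambda>(i, h, j). \<xi> i h j \<omega>) I1) \<in> measurable M (PiM I1 (\<lambda>_. count_space UNIV))"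
  proof (rule measurable_restrict)
    fix k assume "k \<in> I1"
    then obtain i h j where k: "k = (i, h, j)" "i < n" "h < \<tau>" "j < \<gamma>" by (auto simp: I1_def)
    show "(\<lambda>\<omega>. case k of (i, h, j) \<Rightarrow> \<xi> i h j \<omega>) \<in> measurable M (count_space UNIV)"
      using xim[OF k(2-4)] k(1) by simp
  qed
  have Bm: "(\<lambda>\<omega>. restrict (\<lambda>(i, h). b i h \<omega>) I2) \<in> measurable M (PiM I2 (\<lambda>_. borel))"
  proof (rule measurable_restrict)
    fix k assume "k \<in> I2"
    then obtain i h where k: "k = (i, h)" "i < n" "h < \<tau>" by (auto simp: I2_def)
    show "(\<lambda>\<omega>. case k of (i, h) \<Rightarrow> b i h \<omega>) \<in> borel_measurable M"
      using bm[OF k(2-3)] k(1) by simp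
  qed
  define PB where "PB = distr M (PiM I2 (\<lambda>_. borel)) (\<lambda>\<omega>. restrict (\<lambda>(i, h). b i h \<omega>) I2)"
  have cn: "canon n D gl gf \<beta>"
  proof
    show "\<And>i. i < n \<Longrightarrow> finite (D i) \<and> D i \<noteq> {}" by (rule D_fin)
    show "\<And>i z. i < n \<Longrightarrow> z \<in> D i \<Longrightarrow> (\<lambda>\<theta>. gl \<theta> z) \<in> borel_measurable borel" by (rule glm)
    show "\<And>i x. i < n \<Longrightarrow> measure_pmf.expectation (pmf_of_set (D i)) (\<lambda>z. gl x z) = gf i x" by (rule unbiased)
    show "\<And>i x. i < n \<Longrightarrow> measure_pmf.expectation (pmf_of_set (D i)) (\<lambda>z. (norm (gl x z - gf i x))\<^sup>2) \<le> \<beta>\<^sup>2"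
      by (rule bounded_var)
  qed
  interpret C: canon2 n \<tau> \<gamma> \<eta> \<theta>0 D gl gf \<beta> PB r
  proof (rule canon2.intro[OF cn], rule canon2_axioms.intro)
    show "prob_space PB" unfolding PB_def by (rule Mp.prob_space_distr[OF Bm])
    show "sets PB = sets (PiM {(i, h). i < n \<and> h < \<tau>} (\<lambda>_. borel))" unfolding PB_def I2_def by simp
    show "0 < r" by (rule r_pos)
    show "r \<le> n" by (rule r_le)
    show "0 < \<gamma>" by (rule gamma_pos)
  qed
  have I1eq: "C.I1 = I1" unfolding C.I1_def I1_def ..
  have I2eq: "C.I2 = I2" unfolding C.I2_def I2_def ..
  define Z where "Z \<omega> = (restrict (\<lambda>(i, h, j). \<xi> i h j \<omega>) I1, restrict (\<lambda>(i, h). b i h \<omega>) I2, \<Omega> \<omega>)" for \<omega>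
  have Zm: "Z \<in> measurable M C.Sp"
    unfolding Z_def C.Sp_def I1eq I2eq
    by (intro measurable_Pair Xim Bm Om)
  have XiD: "distr M (PiM I1 (\<lambda>_. count_space UNIV)) (\<lambda>\<omega>. restrict (\<lambda>(i, h, j). \<xi> i h j \<omega>) I1) = C.PA"
  proof -
    have ne: "I1 \<noteq> {}" using n0 s_lt gamma_pos unfolding I1_def by auto
    have rv: "\<And>k. k \<in> I1 \<Longrightarrow> (\<lambda>(i, h, j). \<xi> i h j) k \<in> measurable M (count_space UNIV)"
      using xim by (auto simp: I1_def)
    have "distr M (PiM I1 (\<lambda>_. count_space UNIV)) (\<lambda>x. \<lambda>k\<in>I1. (\<lambda>(i, h, j). \<xi> i h j) k x)
        = PiM I1 (\<lambda>k. distr M (count_space UNIV) ((\<lambda>(i, h, j). \<xi> i h j) k))"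
      using Mp.indep_vars_iff_distr_eq_PiM'[OF ne rv] indep_xi unfolding I1_def by simp
    also have "\<dots> = C.PA" unfolding C.PA_def C.M1_def I1eq
      by (intro PiM_cong refl) (auto simp: I1_def xi_distr)
    also have "(\<lambda>x. \<lambda>k\<in>I1. (\<lambda>(i, h, j). \<xi> i h j) k x) = (\<lambda>\<omega>. restrict (\<lambda>(i, h, j). \<xi> i h j \<omega>) I1)"
      by (auto simp: fun_eq_iff restrict_def split: prod.splits)
    finally show ?thesis .
  qed
  have P_eq: "distr M C.Sp Z = C.P"
  proof -
    have "distr M C.Sp Z = distr M (PiM I1 (\<lambda>_. count_space UNIV)) (\<lambda>\<omega>. restrict (\<lambda>(i, h, j). \<xi> i h j \<omega>) I1)
           \<Otimes>\<^sub>M (PB \<Otimes>\<^sub>M distr M (count_space UNIV) \<Omega>)"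
      using indep_groups unfolding C.Sp_def I1eq I2eq Z_def PB_def I1_def I2_def .
    thus ?thesis unfolding XiD Omega_distr C.P_def C.PC_def C.Subs_def .
  qed
  have conv: "(\<integral>\<^sup>+w. g w \<partial>C.P) = (\<integral>\<^sup>+\<omega>. g (Z \<omega>) \<partial>M)" if "g \<in> borel_measurable C.Sp" for g
    unfolding P_eq[symmetric] by (rule nn_integral_distr[OF Zm]) (use that in simp)
  have AE1: "AE \<omega> in M. \<Omega> \<omega> \<in> C.Subs"
  proof -
    have "AE S in distr M (count_space UNIV) \<Omega>. S \<in> C.Subs"
      unfolding Omega_distr[folded C.Subs_def]
      by (simp add: AE_measure_pmf_iff set_pmf_of_set[OF C.Subs_fin(2,1)])
    thus ?thesis by (rule AE_distrD[OF Om])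
  qed
  have finI1: "finite I1" unfolding I1_def
    by (rule finite_subset[of _ "{..<n} \<times> {..<\<tau>} \<times> {..<\<gamma>}"]) auto
  have "\<forall>k\<in>I1. AE \<omega> in M. (case k of (i, h, j) \<Rightarrow> \<xi> i h j \<omega> \<in> D i)"
  proof
    fix k assume "k \<in> I1"
    then obtain i h j where k: "k = (i, h, j)" "i < n" "h < \<tau>" "j < \<gamma>" by (auto simp: I1_def)
    have "AE x in distr M (count_space UNIV) (\<xi> i h j). x \<in> D i"
      unfolding xi_distr[OF k(2-4)] using D_fin[OF k(2)]
      by (simp add: AE_measure_pmf_iff)
    hence "AE \<omega> in M. \<xi> i h j \<omega> \<in> D i" by (rule AE_distrD[OF xim[OF k(2-4)]])
    thus "AE \<omega> in M. (case k of (i, h, j) \<Rightarrow> \<xi> i h j \<omega> \<in> D i)" using k(1) by simp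
  qed
  hence "AE \<omega> in M. \<forall>k\<in>I1. (case k of (i, h, j) \<Rightarrow> \<xi> i h j \<omega> \<in> D i)"
    by (rule eventually_ball_finite[OF finI1])
  hence AE2: "AE \<omega> in M. \<forall>i<n. \<forall>h<\<tau>. \<forall>j<\<gamma>. \<xi> i h j \<omega> \<in> D i"
    by eventually_elim (auto simp: I1_def)
  have teq: "traj \<eta> \<gamma> gl \<theta>0 \<xi> b i h \<omega> = C.ct i h (Z \<omega>)"
    if "\<forall>i<n. \<forall>h<\<tau>. \<forall>j<\<gamma>. \<xi> i h j \<omega> \<in> D i" "i < n" "h \<le> \<tau>" for i h \<omega>
    unfolding C.ct_def
    by (rule traj_cong) (use that in \<open>auto simp: C.cxi_def C.cb_def Z_def I1_def I2_def C.cl_id\<close>)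
  have cbZ: "C.cb i h (Z \<omega>) = b i h \<omega>" if "i < n" "h < \<tau>" for i h \<omega>
    using that by (simp add: C.cb_def Z_def I2_def)
  have sle: "s \<le> \<tau>" using s_lt by simp
  define G where "G w = (\<Sum>i<n. indicator {S. i \<in> S} (snd (snd w)) * C.Kc s (4 * real s * \<eta>\<^sup>2 / real r) (2 * real s * \<eta>\<^sup>2 / real r) i w)" for w
  have Kcm: "C.Kc s (4 * real s * \<eta>\<^sup>2 / real r) (2 * real s * \<eta>\<^sup>2 / real r) i \<in> borel_measurable C.Sp" if "i < n" for i
    using that sle by (rule C.Kc_meas)
  have im: "(\<lambda>w. indicator {S. i \<in> S} (snd (snd w)) :: ennreal) \<in> borel_measurable C.Sp" for i
    unfolding C.Sp_def by (rule measurable_compose[OF measurable_compose[OF measurable_snd measurable_snd]]) simp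
  have Gm: "G \<in> borel_measurable C.Sp"
    unfolding G_def by (rule borel_measurable_sum) (auto intro!: borel_measurable_times_ennreal im Kcm)
  have pw: "AE \<omega> in M. ennreal ((1 / real r) * (\<Sum>i\<in>\<Omega> \<omega>. (norm ((1 / real r) *\<^sub>R (\<Sum>i'\<in>\<Omega> \<omega>. traj \<eta> \<gamma> gl \<theta>0 \<xi> b i' s \<omega>)
                               - traj \<eta> \<gamma> gl \<theta>0 \<xi> b i s \<omega>))\<^sup>2)) \<le> G (Z \<omega>)"
    using AE1 AE2
  proof eventually_elim
    case (elim \<omega>)
    have S: "snd (snd (Z \<omega>)) = \<Omega> \<omega>" by (simp add: Z_def)
    have Ssub: "\<Omega> \<omega> \<subseteq> {..<n}" using elim(1) by (simp add: C.Subs_def)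
    have tr: "traj \<eta> \<gamma> gl \<theta>0 \<xi> b i s \<omega> = C.ct i s (Z \<omega>)" if "i \<in> \<Omega> \<omega>" for i
      using teq[OF elim(2)] that Ssub sle by auto
    have e: "(\<Sum>i'\<in>\<Omega> \<omega>. traj \<eta> \<gamma> gl \<theta>0 \<xi> b i' s \<omega>) = (\<Sum>i'\<in>\<Omega> \<omega>. C.ct i' s (Z \<omega>))"
      by (rule sum.cong) (simp_all add: tr)
    have "(1 / real r) * (\<Sum>i\<in>\<Omega> \<omega>. (norm ((1 / real r) *\<^sub>R (\<Sum>i'\<in>\<Omega> \<omega>. traj \<eta> \<gamma> gl \<theta>0 \<xi> b i' s \<omega>)
                               - traj \<eta> \<gamma> gl \<theta>0 \<xi> b i s \<omega>))\<^sup>2)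
        = (1 / real r) * (\<Sum>i\<in>snd (snd (Z \<omega>)). (norm ((1 / real r) *\<^sub>R (\<Sum>i'\<in>snd (snd (Z \<omega>)). C.ct i' s (Z \<omega>)) - C.ct i s (Z \<omega>)))\<^sup>2)"
      unfolding S e by (intro arg_cong[where f="\<lambda>x. (1 / real r) * x"] sum.cong refl) (simp add: tr)
    also have "\<dots> \<le> (\<Sum>i\<in>snd (snd (Z \<omega>)). \<Sum>h<s. (4 * real s * \<eta>\<^sup>2 / real r) * (norm (C.Fc i h (Z \<omega>)))\<^sup>2
            + (4 * real s * \<eta>\<^sup>2 / real r) * (norm (C.Nc i h (Z \<omega>)))\<^sup>2 + (2 * real s * \<eta>\<^sup>2 / real r) * (norm (C.cb i h (Z \<omega>)))\<^sup>2)"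
      by (rule C.pointwise) (use elim(1) sle S in auto)
    finally have rl: "(1 / real r) * (\<Sum>i\<in>\<Omega> \<omega>. (norm ((1 / real r) *\<^sub>R (\<Sum>i'\<in>\<Omega> \<omega>. traj \<eta> \<gamma> gl \<theta>0 \<xi> b i' s \<omega>)
                               - traj \<eta> \<gamma> gl \<theta>0 \<xi> b i s \<omega>))\<^sup>2) \<le> (\<Sum>i\<in>snd (snd (Z \<omega>)). \<Sum>h<s. (4 * real s * \<eta>\<^sup>2 / real r) * (norm (C.Fc i h (Z \<omega>)))\<^sup>2
            + (4 * real s * \<eta>\<^sup>2 / real r) * (norm (C.Nc i h (Z \<omega>)))\<^sup>2 + (2 * real s * \<eta>\<^sup>2 / real r) * (norm (C.cb i h (Z \<omega>)))\<^sup>2)" .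
    have "ennreal ((1 / real r) * (\<Sum>i\<in>\<Omega> \<omega>. (norm ((1 / real r) *\<^sub>R (\<Sum>i'\<in>\<Omega> \<omega>. traj \<eta> \<gamma> gl \<theta>0 \<xi> b i' s \<omega>)
                               - traj \<eta> \<gamma> gl \<theta>0 \<xi> b i s \<omega>))\<^sup>2)) \<le> ennreal (\<Sum>i\<in>snd (snd (Z \<omega>)). \<Sum>h<s. (4 * real s * \<eta>\<^sup>2 / real r) * (norm (C.Fc i h (Z \<omega>)))\<^sup>2
            + (4 * real s * \<eta>\<^sup>2 / real r) * (norm (C.Nc i h (Z \<omega>)))\<^sup>2 + (2 * real s * \<eta>\<^sup>2 / real r) * (norm (C.cb i h (Z \<omega>)))\<^sup>2)"
      using rl by (rule ennreal_leI)
    also have "\<dots> = (\<Sum>i\<in>snd (snd (Z \<omega>)). C.Kc s (4 * real s * \<eta>\<^sup>2 / real r) (2 * real s * \<eta>\<^sup>2 / real r) i (Z \<omega>))"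
      unfolding C.Kc_def by (rule ennreal_sum3) auto
    also have "\<dots> = G (Z \<omega>)" unfolding G_def S by (rule sum_indicator_subset[OF Ssub, symmetric])
    finally show ?case .
  qed
  have EFeq: "(\<integral>\<^sup>+w. ennreal ((norm (C.Fc i h w))\<^sup>2) \<partial>C.P) = (\<integral>\<^sup>+\<omega>. ennreal ((norm (gf i (traj \<eta> \<gamma> gl \<theta>0 \<xi> b i h \<omega>)))\<^sup>2) \<partial>M)"
    if "i < n" "h < s" for i h
  proof -
    have [measurable]: "C.Fc i h \<in> borel_measurable C.Sp" using that s_lt by (intro C.Fc_meas) auto
    have "(\<integral>\<^sup>+w. ennreal ((norm (C.Fc i h w))\<^sup>2) \<partial>C.P) = (\<integral>\<^sup>+\<omega>. ennreal ((norm (C.Fc i h (Z \<omega>)))\<^sup>2) \<partial>M)"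
      by (rule conv) measurable
    also have "\<dots> = (\<integral>\<^sup>+\<omega>. ennreal ((norm (gf i (traj \<eta> \<gamma> gl \<theta>0 \<xi> b i h \<omega>)))\<^sup>2) \<partial>M)"
      by (rule nn_integral_cong_AE) (use AE2 in \<open>eventually_elim, use teq that s_lt in \<open>auto simp: C.Fc_def\<close>\<close>)
    finally show ?thesis .
  qed
  have Beq: "(\<integral>\<^sup>+w. ennreal ((norm (C.cb i h w))\<^sup>2) \<partial>C.P) = ennreal (real CARD('d) * \<sigma>\<^sup>2)"
    if "i < n" "h < s" for i h
  proof -
    have [measurable]: "C.cb i h \<in> borel_measurable C.Sp" using that s_lt by (intro C.cbm) auto
    have "(\<integral>\<^sup>+w. ennreal ((norm (C.cb i h w))\<^sup>2) \<partial>C.P) = (\<integral>\<^sup>+\<omega>. ennreal ((norm (C.cb i h (Z \<omega>)))\<^sup>2) \<partial>M)"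
      by (rule conv) measurable
    also have "\<dots> = (\<integral>\<^sup>+\<omega>. ennreal ((norm (b i h \<omega>))\<^sup>2) \<partial>M)"
      using that s_lt by (intro nn_integral_cong) (simp add: cbZ)
    also have "\<dots> = (\<integral>\<^sup>+x. gauss_density \<sigma> (x :: real^'d) * ennreal ((norm x)\<^sup>2) \<partial>lborel)"
    proof -
      have bd: "distributed M lborel (b i h) (gauss_density \<sigma>)" using that s_lt by (intro b_distr) auto
      show ?thesis using distributed_nn_integral[OF bd, where g="\<lambda>x. ennreal ((norm x)\<^sup>2)"] by (auto intro: sym)
    qed
    also have "\<dots> = ennreal (real CARD('d) * \<sigma>\<^sup>2)" by (rule gauss_sq[OF sigma_pos])
    finally show ?thesis .
  qed
  have "(\<integral>\<^sup>+\<omega>. ennreal ((1 / real r) * (\<Sum>i\<in>\<Omega> \<omega>. (norm ((1 / real r) *\<^sub>R (\<Sum>i'\<in>\<Omega> \<omega>. traj \<eta> \<gamma> gl \<theta>0 \<xi> b i' s \<omega>)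
                               - traj \<eta> \<gamma> gl \<theta>0 \<xi> b i s \<omega>))\<^sup>2)) \<partial>M) \<le> (\<integral>\<^sup>+\<omega>. G (Z \<omega>) \<partial>M)"
    by (rule nn_integral_mono_AE[OF pw])
  also have "\<dots> = (\<integral>\<^sup>+w. G w \<partial>C.P)" by (rule conv[OF Gm, symmetric])
  also have "\<dots> = (\<Sum>i<n. \<integral>\<^sup>+w. indicator {S. i \<in> S} (snd (snd w)) * C.Kc s (4 * real s * \<eta>\<^sup>2 / real r) (2 * real s * \<eta>\<^sup>2 / real r) i w \<partial>C.P)"
    unfolding G_def by (rule nn_integral_sum) (auto intro!: C.meas_P borel_measurable_times_ennreal im Kcm)
  also have "\<dots> = (\<Sum>i<n. ennreal (real r / real n) * \<integral>\<^sup>+w. C.Kc s (4 * real s * \<eta>\<^sup>2 / real r) (2 * real s * \<eta>\<^sup>2 / real r) i w \<partial>C.P)"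
    by (intro sum.cong refl C.K1 Kcm C.Kc_S) auto
  also have "\<dots> \<le> (\<Sum>i<n. ennreal (real r / real n) * (\<Sum>h<s. ennreal (4 * real s * \<eta>\<^sup>2 / real r) * (\<integral>\<^sup>+w. ennreal ((norm (C.Fc i h w))\<^sup>2) \<partial>C.P) + ennreal (4 * real s * \<eta>\<^sup>2 / real r * (\<beta>\<^sup>2 / real \<gamma>))
              + ennreal (2 * real s * \<eta>\<^sup>2 / real r) * (\<integral>\<^sup>+w. ennreal ((norm (C.cb i h w))\<^sup>2) \<partial>C.P)))"
    by (intro sum_mono mult_left_mono C.Kc_int) (auto simp: sle)
  also have "\<dots> = (\<Sum>i<n. ennreal (real r / real n) * (\<Sum>h<s. ennreal (4 * real s * \<eta>\<^sup>2 / real r) * (\<integral>\<^sup>+\<omega>. ennreal ((norm (gf i (traj \<eta> \<gamma> gl \<theta>0 \<xi> b i h \<omega>)))\<^sup>2) \<partial>M) + ennreal (4 * real s * \<eta>\<^sup>2 / real r * (\<beta>\<^sup>2 / real \<gamma>))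
              + ennreal (2 * real s * \<eta>\<^sup>2 / real r) * ennreal (real CARD('d) * \<sigma>\<^sup>2)))"
    by (intro sum.cong refl arg_cong[where f="\<lambda>x. ennreal (real r / real n) * x"]) (auto simp: EFeq Beq)
  also have "\<dots> \<le> ennreal (2 * (real s)\<^sup>2 * \<eta>\<^sup>2 *
           (real CARD('d) * \<sigma>\<^sup>2 * (real r + 1) / real r + 2 * \<beta>\<^sup>2 / real \<gamma>))
       + ennreal (4 * real s * \<eta>\<^sup>2 *
           (2 * (real n - real r)\<^sup>2 + (real n)\<^sup>2) / (real n) ^ 3)
         * (\<Sum>h<s. \<Sum>i<n. \<integral>\<^sup>+\<omega>. ennreal ((norm (gf i (traj \<eta> \<gamma> gl \<theta>0 \<xi> b i h \<omega>)))\<^sup>2) \<partial>M)"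
    by (rule final_alg[OF r_pos r_le gamma_pos]) simp
  finally show ?thesis .
qed

end
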